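(* Let $1\le p<\infty$ and $\eta\in(0,1)$. There exist $\beta\in(1/2,1)$ and $C_2>0$, depending only on $\eta$ (and $p$), such that for every $\varepsilon\in(0,1)$, every $\lambda\in(0,2^{-p})$, every $f\in\mathcal{H}(\mathbb{D})$ and every $\xi\in\mathbb{T}$, setting $$B=\{\alpha\in\mathbb{D}:\ |f(\alpha)|^p<\varepsilon^{2+\frac2p}B_\lambda f(\alpha)\},$$ we have $$\int_{B\cap\Gamma_{1/2}(\xi)}|f(z)|^p\frac{dm(z)}{1-|z|}\ \le\ \varepsilon\, C_2\int_{\Gamma_\beta(\xi)}|f(z)|^p\frac{dm(z)}{1-|z|}.$$
   Context: $\mathbb{D}$ is the unit disc, $\mathbb{T}$ the unit circle, $dm$ normalized area measure, $\mathcal{H}(\mathbb{D})$ the analytic functions on $\mathbb{D}$. For $\beta\in(0,1)$ and $\xi\in\mathbb{T}$, $\Gamma_\beta(\xi)=\{z\in\mathbb{D}:|z|<\beta\}\cup\bigcup_{|z|<\beta}[z,\xi)$, where $[z,\xi)$ is the half-open segment from $z$ to $\xi$. For $\alpha\in\mathbb{D}$, $\Delta_\eta(\alpha)=\{z\in\mathbb{D}:|z-\alpha|<\eta(1-|\alpha|)\}$. For $\lambda\in(0,1)$: $E_\lambda(\alpha)=\{z\in\Delta_\eta(\alpha):|f(z)|^p\ge\lambda|f(\alpha)|^p\}$ and $B_\lambda f(\alpha)=\frac{1}{m(E_\lambda(\alpha))}\int_{E_\lambda(\alpha)}|f(z)|^p\,dm(z)$. *)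

theory Defs
  imports "HOL-Analysis.Analysis"
begin

definition area_m :: "complex set \<Rightarrow> ennreal" where
  "area_m A = emeasure lborel A / ennreal pi"

definition area_int :: "complex set \<Rightarrow> (complex \<Rightarrow> real) \<Rightarrow> ennreal" where
  "area_int S g = (\<integral>\<^sup>+ z. ennreal (g z) * indicator S z \<partial>lborel) / ennreal pi"

definition unit_disc :: "complex set" where
  "unit_disc = ball 0 1"

definition Gamma_reg :: "real \<Rightarrow> complex \<Rightarrow> complex set" where
  "Gamma_reg \<beta> \<xi> = {z. cmod z < \<beta>} \<union> (\<Union>w\<in>{z. cmod z < \<beta>}. closed_segment w \<xi> - {\<xi>})"

definition Delta :: "real \<Rightarrow> complex \<Rightarrow> complex set" where
  "Delta \<eta> \<alpha> = {z \<in> unit_disc. cmod (z - \<alpha>) < \<eta> * (1 - cmod \<alpha>)}"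

definition E_set :: "real \<Rightarrow> real \<Rightarrow> real \<Rightarrow> (complex \<Rightarrow> complex) \<Rightarrow> complex \<Rightarrow> complex set" where
  "E_set p \<eta> lam f \<alpha> = {z \<in> Delta \<eta> \<alpha>. cmod (f z) powr p \<ge> lam * cmod (f \<alpha>) powr p}"

definition B_avg :: "real \<Rightarrow> real \<Rightarrow> real \<Rightarrow> (complex \<Rightarrow> complex) \<Rightarrow> complex \<Rightarrow> ennreal" where
  "B_avg p \<eta> lam f \<alpha> =
     area_int (E_set p \<eta> lam f \<alpha>) (\<lambda>z. cmod (f z) powr p) / area_m (E_set p \<eta> lam f \<alpha>)"

end

theory Submission
  imports Defs "HOL-Complex_Analysis.Complex_Analysis"
begin

lemma has_contour_integral_linepath_same_Im_iff:
  assumes "Im z = c" "Im z' = c" "Re z = a" "Re z' = b" "a < b"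
  shows   "(f has_contour_integral I) (linepath z z') \<longleftrightarrow>
             ((\<lambda>x. f (Complex x c)) has_integral I) {a..b}"
proof -
  have "(f has_contour_integral I) (linepath z z') \<longleftrightarrow>
          ((\<lambda>x. f (linepath z z' x) * (z' - z)) has_integral I) {0..1}"
    by (subst has_contour_integral_linepath) simp_all
  also have "\<dots> \<longleftrightarrow> ((\<lambda>x. f (c *\<^sub>R \<i> + of_real (a + (b - a) * x)) * of_real (b - a)) has_integral I) {0..1}"
    using assms
    by (intro has_integral_cong arg_cong2[of _ _ _ _ "(*)"] arg_cong[of _ _ f])
       (auto simp: linepath_def complex_eq_iff algebra_simps)
  also have "{0..1} = (\<lambda>x. x / (b - a)) ` {0..b-a}"
    using assms by simp
  also have "((\<lambda>x. f (c *\<^sub>R \<i> + of_real (a + (b - a) * x)) * of_real (b - a)) has_integral I) \<dots> \<longleftrightarrow>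
             ((\<lambda>x. f (c *\<^sub>R \<i> + of_real (a + x)) * of_real (b - a)) has_integral ((b-a) *\<^sub>R I)) {0..b-a}"
    by (subst has_integral_stretch_real_iff) (use assms in simp_all)
  also have "\<dots> \<longleftrightarrow> ((\<lambda>x. of_real (b-a) * (f (c *\<^sub>R \<i> + of_real x))) has_integral (b-a) *\<^sub>R I) {a..b}"
    by (subst has_integral_shift_real_ivl_iff[where c = "-a"])
       (simp_all add: scaleR_conv_of_real mult_ac)
  also have "\<dots> \<longleftrightarrow> ((\<lambda>x. f (c *\<^sub>R \<i> + of_real x)) has_integral I) {a..b}"
    by (subst has_integral_mult_right_iff) (use assms in \<open>auto simp: scaleR_conv_of_real\<close>)
  finally show ?thesis 
    by (simp add: scaleR_conv_of_real Complex_eq mult.commute add.commute)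
qed


lemma measurable_Complex_pair [measurable]:
  "(\<lambda>p::real\<times>real. Complex (fst p) (snd p)) \<in> borel_measurable borel"
  by (intro borel_measurable_continuous_onI continuous_intros)

lemma lborel_complex_pair:
  "(lborel :: complex measure) = distr (lborel \<Otimes>\<^sub>M lborel) borel (\<lambda>p. Complex (fst p) (snd p))"
proof (rule lborel_eqI)
  fix l u :: complex assume le: "\<And>b. b\<in>Basis \<Longrightarrow> l\<bullet>b \<le> u\<bullet>b"
  have m: "(\<lambda>p::real\<times>real. Complex (fst p) (snd p)) \<in> (lborel \<Otimes>\<^sub>M lborel) \<rightarrow>\<^sub>M borel"
    by (simp add: lborel_prod)
  have pre: "(\<lambda>p::real\<times>real. Complex (fst p) (snd p)) -` box l u \<inter> space (lborel \<Otimes>\<^sub>M lborel)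
     = {Re l<..<Re u} \<times> {Im l<..<Im u}"
    by (auto simp: in_box_complex_iff space_pair_measure)
  show "emeasure (distr (lborel \<Otimes>\<^sub>M lborel) borel (\<lambda>p. Complex (fst p) (snd p))) (box l u) = (\<Prod>b\<in>Basis. (u - l) \<bullet> b)"
    using le[of 1] le[of \<i>]
    by (simp add: emeasure_distr[OF m] pre lborel.emeasure_pair_measure_Times Basis_complex_def ennreal_mult)
qed simp

lemma horiz_bound:
  assumes g: "g contour_integrable_on (linepath z z')" and "Im z = c" "Im z' = c" "Re z = a" "Re z' = b" "a < b"
    and hi: "h integrable_on {a..b}" and le: "\<And>x. x \<in> {a..b} \<Longrightarrow> cmod (g (Complex x c)) \<le> h x"
  shows "cmod (contour_integral (linepath z z') g) \<le> integral {a..b} h"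
proof -
  have "((\<lambda>x. g (Complex x c)) has_integral contour_integral (linepath z z') g) {a..b}"
    using has_contour_integral_integral[OF g] has_contour_integral_linepath_same_Im_iff[OF assms(2-6)] by blast
  then show ?thesis
    using Henstock_Kurzweil_Integration.integral_norm_bound_integral[OF has_integral_integrable hi le]
    by (metis integral_unique)
qed

lemma vert_bound:
  assumes g: "g contour_integrable_on (linepath z z')" and "Re z = c" "Re z' = c" "Im z = a" "Im z' = b" "a < b"
    and hi: "h integrable_on {a..b}" and le: "\<And>x. x \<in> {a..b} \<Longrightarrow> cmod (g (Complex c x)) \<le> h x"
  shows "cmod (contour_integral (linepath z z') g) \<le> integral {a..b} h"
proof -
  have "((\<lambda>x. g (Complex c x)) has_integral (- \<i> * contour_integral (linepath z z') g)) {a..b}"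
    using has_contour_integral_integral[OF g] has_contour_integral_linepath_same_Re_iff[OF assms(2-6)] by blast
  then have "cmod (- \<i> * contour_integral (linepath z z') g) \<le> integral {a..b} h"
    using Henstock_Kurzweil_Integration.integral_norm_bound_integral[OF has_integral_integrable hi le]
    by (metis integral_unique)
  then show ?thesis by (simp add: norm_mult)
qed

lemma cauchy_square_bound:
  fixes f :: "complex \<Rightarrow> complex" and w :: complex and sa Rr :: real
  assumes hol: "f holomorphic_on ball w Rr" and sa: "0 < sa" "2* sa < Rr"
  shows "2*pi* sa*cmod (f w) \<le> integral {Re w - sa..Re w + sa} (\<lambda>x. cmod (f (Complex x (Im w - sa))))
        + integral {Im w - sa..Im w + sa} (\<lambda>y. cmod (f (Complex (Re w + sa) y)))
        + integral {Re w - sa..Re w + sa} (\<lambda>x. cmod (f (Complex x (Im w + sa))))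
        + integral {Im w - sa..Im w + sa} (\<lambda>y. cmod (f (Complex (Re w - sa) y)))"
proof -
  define g where "g = (\<lambda>z. f z / (z - w))"
  define a1 where "a1 = Complex (Re w - sa) (Im w - sa)"
  define a2 where "a2 = Complex (Re w + sa) (Im w - sa)"
  define a3 where "a3 = Complex (Re w + sa) (Im w + sa)"
  define a4 where "a4 = Complex (Re w - sa) (Im w + sa)"
  have rp: "rectpath a1 a3 = linepath a1 a2 +++ linepath a2 a3 +++ linepath a3 a4 +++ linepath a4 a1"
    by (simp add: rectpath_def Let_def a1_def a2_def a3_def a4_def)
  have wbox: "w \<in> box a1 a3" using sa by (auto simp: in_box_complex_iff a1_def a3_def)
  have cbox_ball: "cbox a1 a3 \<subseteq> ball w Rr"
  proof
    fix z assume "z \<in> cbox a1 a3"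
    then have "\<bar>Re (z - w)\<bar> \<le> sa" "\<bar>Im (z - w)\<bar> \<le> sa" by (auto simp: in_cbox_complex_iff a1_def a3_def)
    then have "cmod (z - w) \<le> 2* sa" using cmod_le[of "z - w"] by linarith
    then show "z \<in> ball w Rr" using sa by (simp add: dist_norm norm_minus_commute)
  qed
  have pim: "path_image (rectpath a1 a3) = cbox a1 a3 - box a1 a3"
    by (rule path_image_rectpath_cbox_minus_box) (use sa in \<open>auto simp: a1_def a3_def\<close>)
  have cauchy: "(g has_contour_integral (2*pi*\<i>*1*f w)) (rectpath a1 a3)"
    unfolding g_def winding_number_rectpath[OF wbox, symmetric]
    by (rule Cauchy_integral_formula_convex_simple[OF convex_ball hol])
       (use sa wbox cbox_ball pim in auto)
  have gcont: "continuous_on (ball w Rr - {w}) g"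
    unfolding g_def
    by (intro continuous_intros holomorphic_on_imp_continuous_on[OF holomorphic_on_subset[OF hol]]) auto
  have seg: "closed_segment a b \<subseteq> ball w Rr - {w}"
    if "a \<in> cbox a1 a3" "b \<in> cbox a1 a3" "w \<notin> closed_segment a b" for a b
    using closed_segment_subset[OF that(1,2) convex_box(1)] cbox_ball that(3) by blast
  have cb: "a1 \<in> cbox a1 a3" "a2 \<in> cbox a1 a3" "a3 \<in> cbox a1 a3" "a4 \<in> cbox a1 a3"
    using sa by (auto simp: in_cbox_complex_iff a1_def a2_def a3_def a4_def)
  have nw: "w \<notin> closed_segment a1 a2" "w \<notin> closed_segment a2 a3" "w \<notin> closed_segment a3 a4"
           "w \<notin> closed_segment a4 a1"
    using sa by (auto simp: closed_segment_same_Im closed_segment_same_Re a1_def a2_def a3_def a4_def)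
  have ci: "g contour_integrable_on linepath a b"
    if "a \<in> cbox a1 a3" "b \<in> cbox a1 a3" "w \<notin> closed_segment a b" for a b
    by (rule contour_integrable_continuous_linepath, rule continuous_on_subset[OF gcont seg[OF that]])
  define I1 I2 I3 I4 where "I1 = contour_integral (linepath a1 a2) g"
    and "I2 = contour_integral (linepath a2 a3) g" and "I3 = contour_integral (linepath a3 a4) g"
    and "I4 = contour_integral (linepath a4 a1) g"
  have "(g has_contour_integral (I1 + (I2 + (I3 + I4)))) (rectpath a1 a3)"
    unfolding rp I1_def I2_def I3_def I4_def
    by (intro has_contour_integral_join has_contour_integral_integral ci cb nw valid_path_join) auto
  then have eq: "2*pi*\<i>*f w = I1 + I2 + I3 + I4"
    using cauchy has_contour_integral_unique by fastforce
  have fcont: "continuous_on (ball w Rr) f" using hol holomorphic_on_imp_continuous_on by blast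
  have hint1: "(\<lambda>x. cmod (f (Complex x c))) integrable_on {a..b}"
    if "\<And>x. x \<in> {a..b} \<Longrightarrow> Complex x c \<in> ball w Rr" for a b c
  proof -
    have "continuous_on {a..b} (\<lambda>x. cmod (f (Complex x c)))"
      by (intro continuous_intros continuous_on_compose2[OF fcont]) (use that sa in auto)
    then show ?thesis by (rule integrable_continuous_interval)
  qed
  have hint2: "(\<lambda>y. cmod (f (Complex c y))) integrable_on {a..b}"
    if "\<And>y. y \<in> {a..b} \<Longrightarrow> Complex c y \<in> ball w Rr" for a b c
  proof -
    have "continuous_on {a..b} (\<lambda>y. cmod (f (Complex c y)))"
      by (intro continuous_intros continuous_on_compose2[OF fcont]) (use that sa in auto)
    then show ?thesis by (rule integrable_continuous_interval)
  qed
  have gle: "cmod (g z) \<le> cmod (f z) / sa" if "\<bar>Re (z - w)\<bar> = sa \<or> \<bar>Im (z - w)\<bar> = sa" for z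
  proof -
    have "sa \<le> cmod (z - w)" using that abs_Re_le_cmod abs_Im_le_cmod by metis
    then show ?thesis using sa by (simp add: g_def norm_divide) (rule divide_left_mono, auto intro!: mult_pos_pos)
  qed
  have inb: "Complex x y \<in> ball w Rr" if "\<bar>x - Re w\<bar> \<le> sa" "\<bar>y - Im w\<bar> \<le> sa" for x y
  proof -
    have "Complex x y \<in> cbox a1 a3" using that by (auto simp: in_cbox_complex_iff a1_def a3_def abs_le_iff)
    then show ?thesis using cbox_ball by blast
  qed
  have b1: "cmod I1 \<le> integral {Re w - sa..Re w + sa} (\<lambda>x. cmod (f (Complex x (Im w - sa))) / sa)"
    unfolding I1_def
    by (rule horiz_bound[OF ci[OF cb(1,2) nw(1)]]) (use sa in \<open>auto simp: a1_def a2_def intro!: hint1 inb gle\<close>)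
  have b2: "cmod I2 \<le> integral {Im w - sa..Im w + sa} (\<lambda>y. cmod (f (Complex (Re w + sa) y)) / sa)"
    unfolding I2_def
    by (rule vert_bound[OF ci[OF cb(2,3) nw(2)]]) (use sa in \<open>auto simp: a3_def a2_def intro!: hint2 inb gle\<close>)
  have b3: "cmod I3 \<le> integral {Re w - sa..Re w + sa} (\<lambda>x. cmod (f (Complex x (Im w + sa))) / sa)"
  proof -
    have "I3 = - contour_integral (linepath a4 a3) g"
      unfolding I3_def
      by (rule contour_integral_reverse_linepath, rule continuous_on_subset[OF gcont seg[OF cb(3,4) nw(3)]])
    moreover have n3: "w \<notin> closed_segment a4 a3" using nw(3) by (simp add: closed_segment_commute)
    moreover have "cmod (contour_integral (linepath a4 a3) g) \<le> integral {Re w - sa..Re w + sa} (\<lambda>x. cmod (f (Complex x (Im w + sa))) / sa)"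
      by (rule horiz_bound[OF ci[OF cb(4,3) n3]]) (use sa in \<open>auto simp: a3_def a4_def intro!: hint1 inb gle\<close>)
    ultimately show ?thesis by simp
  qed
  have b4: "cmod I4 \<le> integral {Im w - sa..Im w + sa} (\<lambda>y. cmod (f (Complex (Re w - sa) y)) / sa)"
  proof -
    have "I4 = - contour_integral (linepath a1 a4) g"
      unfolding I4_def
      by (rule contour_integral_reverse_linepath, rule continuous_on_subset[OF gcont seg[OF cb(4,1) nw(4)]])
    moreover have n4: "w \<notin> closed_segment a1 a4" using nw(4) by (simp add: closed_segment_commute)
    moreover have "cmod (contour_integral (linepath a1 a4) g) \<le> integral {Im w - sa..Im w + sa} (\<lambda>y. cmod (f (Complex (Re w - sa) y)) / sa)"
      by (rule vert_bound[OF ci[OF cb(1,4) n4]]) (use sa in \<open>auto simp: a1_def a4_def intro!: hint2 inb gle\<close>)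
    ultimately show ?thesis by simp
  qed
  have "2*pi*cmod (f w) = cmod (I1 + I2 + I3 + I4)"
    using eq[symmetric] by (simp add: norm_mult)
  also have "\<dots> \<le> cmod I1 + cmod I2 + cmod I3 + cmod I4"
    by (metis norm_triangle_le order_refl add_mono)
  finally have "2*pi*cmod (f w) \<le> integral {Re w - sa..Re w + sa} (\<lambda>x. cmod (f (Complex x (Im w - sa)))) / sa
        + integral {Im w - sa..Im w + sa} (\<lambda>y. cmod (f (Complex (Re w + sa) y))) / sa
        + integral {Re w - sa..Re w + sa} (\<lambda>x. cmod (f (Complex x (Im w + sa)))) / sa
        + integral {Im w - sa..Im w + sa} (\<lambda>y. cmod (f (Complex (Re w - sa) y))) / sa"
    using b1 b2 b3 b4 by (simp add: integral_divide)
  then show ?thesis using sa by (simp add: field_simps)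
qed

lemma measurable_Complex [measurable (raw)]:
  assumes "f \<in> M \<rightarrow>\<^sub>M borel" "g \<in> M \<rightarrow>\<^sub>M borel"
  shows "(\<lambda>x. Complex (f x) (g x)) \<in> M \<rightarrow>\<^sub>M borel"
proof -
  have "(\<lambda>x. (f x, g x)) \<in> M \<rightarrow>\<^sub>M borel" using assms by measurable
  from measurable_compose[OF this measurable_Complex_pair] show ?thesis by simp
qed

lemma nn_integral_complex_fst:
  assumes [measurable]: "g \<in> borel_measurable borel"
  shows "(\<integral>\<^sup>+z. g z \<partial>lborel) = (\<integral>\<^sup>+x. (\<integral>\<^sup>+y. g (Complex x y) \<partial>lborel) \<partial>lborel)"
proof -
  have "(\<integral>\<^sup>+z. g z \<partial>lborel) = (\<integral>\<^sup>+p. g (Complex (fst p) (snd p)) \<partial>(lborel \<Otimes>\<^sub>M lborel))"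
    by (subst lborel_complex_pair) (simp add: nn_integral_distr lborel_prod)
  also have "\<dots> = (\<integral>\<^sup>+x. (\<integral>\<^sup>+y. g (Complex x y) \<partial>lborel) \<partial>lborel)"
    by (subst lborel.nn_integral_fst[symmetric]) (auto simp: lborel_prod)
  finally show ?thesis .
qed

lemma nn_integral_complex_snd:
  assumes [measurable]: "g \<in> borel_measurable borel"
  shows "(\<integral>\<^sup>+z. g z \<partial>lborel) = (\<integral>\<^sup>+y. (\<integral>\<^sup>+x. g (Complex x y) \<partial>lborel) \<partial>lborel)"
proof -
  have "(\<integral>\<^sup>+z. g z \<partial>lborel) = (\<integral>\<^sup>+x. (\<integral>\<^sup>+y. g (Complex x y) \<partial>lborel) \<partial>lborel)"
    by (rule nn_integral_complex_fst) simp
  also have "\<dots> = (\<integral>\<^sup>+y. (\<integral>\<^sup>+x. g (Complex x y) \<partial>lborel) \<partial>lborel)"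
    by (rule pair_sigma_finite.Fubini'[symmetric]) (auto simp: split_beta' lborel_prod pair_sigma_finite_def lborel.sigma_finite_measure_axioms)
  finally show ?thesis .
qed

lemma shift_le:
  fixes F :: "real \<Rightarrow> ennreal"
  assumes [measurable]: "F \<in> borel_measurable borel" and r: "0 < r" and c: "c = 1 \<or> c = -1"
  shows "(\<integral>\<^sup>+s. F (v + c * s) * indicator {r/2..r} s \<partial>lborel) \<le> (\<integral>\<^sup>+y. F y * indicator {v-r..v+r} y \<partial>lborel)"
proof -
  have cne: "c \<noteq> 0" using c by auto
  have "(\<integral>\<^sup>+y. F y * indicator {v-r..v+r} y \<partial>lborel) = ennreal \<bar>c\<bar> * (\<integral>\<^sup>+s. F (v + c * s) * indicator {v-r..v+r} (v + c * s) \<partial>lborel)"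
    by (rule nn_integral_real_affine[OF _ cne]) simp
  also have "\<dots> = (\<integral>\<^sup>+s. F (v + c * s) * indicator {v-r..v+r} (v + c * s) \<partial>lborel)"
    using c by auto
  finally have eq: "(\<integral>\<^sup>+y. F y * indicator {v-r..v+r} y \<partial>lborel) = (\<integral>\<^sup>+s. F (v + c * s) * indicator {v-r..v+r} (v + c * s) \<partial>lborel)" .
  show ?thesis unfolding eq
    by (rule nn_integral_mono) (use c r in \<open>auto split: split_indicator\<close>)
qed

lemma integral_to_nn:
  fixes h :: "real \<Rightarrow> real"
  assumes "continuous_on {a..b} h" "\<And>x. x \<in> {a..b} \<Longrightarrow> 0 \<le> h x"
  shows "ennreal (integral {a..b} h) = (\<integral>\<^sup>+x. ennreal (h x) * indicator {a..b} x \<partial>lborel)"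
  using nn_integral_has_integral_lebesgue'[OF assms(2) integrable_integral[OF integrable_continuous_interval[OF assms(1)]]]
  by simp

lemma integral_nonneg_any:
  fixes h :: "'a::euclidean_space \<Rightarrow> real"
  assumes "\<And>x. x \<in> S \<Longrightarrow> 0 \<le> h x"
  shows "0 \<le> integral S h"
proof (cases "h integrable_on S")
  case True then show ?thesis using assms by (rule integral_nonneg)
qed (simp add: not_integrable_integral)

lemma mv1:
  fixes f :: "complex \<Rightarrow> complex"
  assumes hol: "f holomorphic_on ball w Rr" and r: "0 < r" "2 * r < Rr"
  shows "ennreal (cmod (f w)) \<le> ennreal (8 / (pi * r^2)) *
     (\<integral>\<^sup>+z. ennreal (cmod (f z)) * indicator (cbox (w - Complex r r) (w + Complex r r)) z \<partial>lborel)"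
proof -
  define u v where "u = Re w" and "v = Im w"
  define Q where "Q = cbox (w - Complex r r) (w + Complex r r)"
  define G where "G z = indicator (ball w Rr) z *\<^sub>R cmod (f z)" for z
  have fcont: "continuous_on (ball w Rr) f" using hol holomorphic_on_imp_continuous_on by blast
  have Gm[measurable]: "G \<in> borel_measurable borel"
    unfolding G_def[abs_def]
    by (rule borel_measurable_continuous_on_indicator) (auto intro!: continuous_intros fcont)
  have inball: "Complex x y \<in> ball w Rr" if "\<bar>x - u\<bar> \<le> r" "\<bar>y - v\<bar> \<le> r" for x y
  proof -
    have "cmod (Complex x y - w) \<le> \<bar>Re (Complex x y - w)\<bar> + \<bar>Im (Complex x y - w)\<bar>" by (rule cmod_le)
    also have "\<dots> \<le> 2 * r" using that by (simp add: u_def v_def)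
    finally show ?thesis using r by (simp add: dist_norm norm_minus_commute)
  qed
  have GQ: "G (Complex x y) = cmod (f (Complex x y))" if "\<bar>x - u\<bar> \<le> r" "\<bar>y - v\<bar> \<le> r" for x y
    using inball[OF that] by (simp add: G_def)
  define H1 where "H1 y = (\<integral>\<^sup>+x. ennreal (G (Complex x y)) * indicator {u-r..u+r} x \<partial>lborel)" for y
  define H2 where "H2 x = (\<integral>\<^sup>+y. ennreal (G (Complex x y)) * indicator {v-r..v+r} y \<partial>lborel)" for x
  have H1m[measurable]: "H1 \<in> borel_measurable borel" unfolding H1_def[abs_def] by measurable
  have H2m[measurable]: "H2 \<in> borel_measurable borel" unfolding H2_def[abs_def] by measurable
  define T where "T = (\<integral>\<^sup>+z. ennreal (cmod (f z)) * indicator Q z \<partial>lborel)"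
  have Qiff: "Complex x y \<in> Q \<longleftrightarrow> x \<in> {u-r..u+r} \<and> y \<in> {v-r..v+r}" for x y
    by (auto simp: Q_def in_cbox_complex_iff u_def v_def)
  have TG: "T = (\<integral>\<^sup>+z. ennreal (G z) * indicator Q z \<partial>lborel)"
    unfolding T_def
  proof (rule nn_integral_cong)
    fix z :: complex
    show "ennreal (cmod (f z)) * indicator Q z = ennreal (G z) * indicator Q z"
    proof (cases "z \<in> Q")
      case True
      then have "\<bar>Re z - u\<bar> \<le> r" "\<bar>Im z - v\<bar> \<le> r" using Qiff[of "Re z" "Im z"] by auto
      then show ?thesis using GQ[of "Re z" "Im z"] by simp
    qed simp
  qed
  have T1: "(\<integral>\<^sup>+y. H1 y * indicator {v-r..v+r} y \<partial>lborel) = T"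
  proof -
    have "T = (\<integral>\<^sup>+y. (\<integral>\<^sup>+x. ennreal (G (Complex x y)) * indicator Q (Complex x y) \<partial>lborel) \<partial>lborel)"
      unfolding TG Q_def by (rule nn_integral_complex_snd) measurable
    also have "\<dots> = (\<integral>\<^sup>+y. H1 y * indicator {v-r..v+r} y \<partial>lborel)"
      unfolding H1_def
      by (rule nn_integral_cong, subst nn_integral_multc[symmetric])
         (auto simp: Qiff split: split_indicator intro!: nn_integral_cong)
    finally show ?thesis by simp
  qed
  have T2: "(\<integral>\<^sup>+x. H2 x * indicator {u-r..u+r} x \<partial>lborel) = T"
  proof -
    have "T = (\<integral>\<^sup>+x. (\<integral>\<^sup>+y. ennreal (G (Complex x y)) * indicator Q (Complex x y) \<partial>lborel) \<partial>lborel)"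
      unfolding TG Q_def by (rule nn_integral_complex_fst) measurable
    also have "\<dots> = (\<integral>\<^sup>+x. H2 x * indicator {u-r..u+r} x \<partial>lborel)"
      unfolding H2_def
      by (rule nn_integral_cong, subst nn_integral_multc[symmetric])
         (auto simp: Qiff split: split_indicator intro!: nn_integral_cong)
    finally show ?thesis by simp
  qed
  have key: "ennreal (pi * r * cmod (f w)) \<le> H1 (v - s) + H2 (u + s) + H1 (v + s) + H2 (u - s)"
    if s: "s \<in> {r/2..r}" for s
  proof -
    have s0: "0 < s" "2 * s < Rr" using s r by auto
    have cs: "continuous_on {a..b} (\<lambda>x. cmod (f (Complex x c)))"
      if "\<And>x. x \<in> {a..b} \<Longrightarrow> Complex x c \<in> ball w Rr" for a b c
      by (intro continuous_intros continuous_on_compose2[OF fcont]) (use that in auto)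
    have cs2: "continuous_on {a..b} (\<lambda>y. cmod (f (Complex c y)))"
      if "\<And>y. y \<in> {a..b} \<Longrightarrow> Complex c y \<in> ball w Rr" for a b c
      by (intro continuous_intros continuous_on_compose2[OF fcont]) (use that in auto)
    define L1 where "L1 = integral {u - s..u + s} (\<lambda>x. cmod (f (Complex x (v - s))))"
    define L2 where "L2 = integral {v - s..v + s} (\<lambda>y. cmod (f (Complex (u + s) y)))"
    define L3 where "L3 = integral {u - s..u + s} (\<lambda>x. cmod (f (Complex x (v + s))))"
    define L4 where "L4 = integral {v - s..v + s} (\<lambda>y. cmod (f (Complex (u - s) y)))"
    have cb: "2*pi * s * cmod (f w) \<le> L1 + L2 + L3 + L4"
      using cauchy_square_bound[OF hol s0] by (simp add: L1_def L2_def L3_def L4_def u_def v_def)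
    have e1: "ennreal L1 \<le> H1 (v - s)"
    proof -
      have "ennreal L1 = (\<integral>\<^sup>+x. ennreal (cmod (f (Complex x (v - s)))) * indicator {u-s..u+s} x \<partial>lborel)"
        unfolding L1_def by (rule integral_to_nn) (use s r in \<open>auto intro!: cs inball\<close>)
      also have "\<dots> \<le> H1 (v - s)" unfolding H1_def
        by (rule nn_integral_mono) (use s r GQ in \<open>auto split: split_indicator\<close>)
      finally show ?thesis .
    qed
    have e3: "ennreal L3 \<le> H1 (v + s)"
    proof -
      have "ennreal L3 = (\<integral>\<^sup>+x. ennreal (cmod (f (Complex x (v + s)))) * indicator {u-s..u+s} x \<partial>lborel)"
        unfolding L3_def by (rule integral_to_nn) (use s r in \<open>auto intro!: cs inball\<close>)
      also have "\<dots> \<le> H1 (v + s)" unfolding H1_def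
        by (rule nn_integral_mono) (use s r GQ in \<open>auto split: split_indicator\<close>)
      finally show ?thesis .
    qed
    have e2: "ennreal L2 \<le> H2 (u + s)"
    proof -
      have "ennreal L2 = (\<integral>\<^sup>+y. ennreal (cmod (f (Complex (u + s) y))) * indicator {v-s..v+s} y \<partial>lborel)"
        unfolding L2_def by (rule integral_to_nn) (use s r in \<open>auto intro!: cs2 inball\<close>)
      also have "\<dots> \<le> H2 (u + s)" unfolding H2_def
        by (rule nn_integral_mono) (use s r GQ in \<open>auto split: split_indicator\<close>)
      finally show ?thesis .
    qed
    have e4: "ennreal L4 \<le> H2 (u - s)"
    proof -
      have "ennreal L4 = (\<integral>\<^sup>+y. ennreal (cmod (f (Complex (u - s) y))) * indicator {v-s..v+s} y \<partial>lborel)"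
        unfolding L4_def by (rule integral_to_nn) (use s r in \<open>auto intro!: cs2 inball\<close>)
      also have "\<dots> \<le> H2 (u - s)" unfolding H2_def
        by (rule nn_integral_mono) (use s r GQ in \<open>auto split: split_indicator\<close>)
      finally show ?thesis .
    qed
    have nn: "0 \<le> L1" "0 \<le> L2" "0 \<le> L3" "0 \<le> L4"
      unfolding L1_def L2_def L3_def L4_def by (auto intro!: integral_nonneg_any)
    have "pi * r * cmod (f w) \<le> 2*pi * s * cmod (f w)"
      using s by (intro mult_right_mono) auto
    then have "ennreal (pi * r * cmod (f w)) \<le> ennreal (L1 + L2 + L3 + L4)"
      using cb by (intro ennreal_leI) linarith
    also have "\<dots> = ennreal L1 + ennreal L2 + ennreal L3 + ennreal L4"
      using nn by (simp add: ennreal_plus)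
    also have "\<dots> \<le> H1 (v - s) + H2 (u + s) + H1 (v + s) + H2 (u - s)"
      using e1 e2 e3 e4 by (intro add_mono) auto
    finally show ?thesis .
  qed
  have "ennreal (pi * r * cmod (f w)) * ennreal (r / 2) = (\<integral>\<^sup>+s. ennreal (pi * r * cmod (f w)) * indicator {r/2..r} s \<partial>lborel)"
    using r by (simp add: nn_integral_cmult_indicator)
  also have "\<dots> \<le> (\<integral>\<^sup>+s. (H1 (v + (-1) * s) * indicator {r/2..r} s + H2 (u + 1 * s) * indicator {r/2..r} s)
       + (H1 (v + 1 * s) * indicator {r/2..r} s + H2 (u + (-1) * s) * indicator {r/2..r} s) \<partial>lborel)"
  proof (rule nn_integral_mono)
    fix s :: real
    show "ennreal (pi * r * cmod (f w)) * indicator {r/2..r} s \<le> (H1 (v + (-1) * s) * indicator {r/2..r} s + H2 (u + 1 * s) * indicator {r/2..r} s)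
       + (H1 (v + 1 * s) * indicator {r/2..r} s + H2 (u + (-1) * s) * indicator {r/2..r} s)"
      using key[of s] by (cases "s \<in> {r/2..r}") (auto simp: add.assoc)
  qed
  also have "\<dots> = ((\<integral>\<^sup>+s. H1 (v + (-1) * s) * indicator {r/2..r} s \<partial>lborel) + (\<integral>\<^sup>+s. H2 (u + 1 * s) * indicator {r/2..r} s \<partial>lborel))
       + ((\<integral>\<^sup>+s. H1 (v + 1 * s) * indicator {r/2..r} s \<partial>lborel) + (\<integral>\<^sup>+s. H2 (u + (-1) * s) * indicator {r/2..r} s \<partial>lborel))"
    by (simp add: nn_integral_add)
  also have "\<dots> \<le> (T + T) + (T + T)"
    using shift_le[OF H1m r(1), of "-1" v] shift_le[OF H1m r(1), of 1 v]
          shift_le[OF H2m r(1), of "-1" u] shift_le[OF H2m r(1), of 1 u] T1 T2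
    by (intro add_mono) auto
  also have "(T + T) + (T + T) = 4 * T"
    by (simp add: mult_2[symmetric] mult.assoc[symmetric])
  finally have A0: "ennreal (pi * r * cmod (f w)) * ennreal (r / 2) \<le> 4 * T" .
  have A: "ennreal (pi * r * cmod (f w) * (r / 2)) \<le> 4 * T"
    using A0 r by (subst ennreal_mult) auto
  have "ennreal (cmod (f w)) = ennreal (2 / (pi * r^2)) * ennreal (pi * r * cmod (f w) * (r / 2))"
    using r by (simp add: ennreal_mult[symmetric] power2_eq_square field_simps)
  also have "\<dots> \<le> ennreal (2 / (pi * r^2)) * (4 * T)"
    by (rule mult_left_mono[OF A]) simp
  also have "\<dots> = ennreal (8 / (pi * r^2)) * T"
    by (simp add: mult.assoc[symmetric] ennreal_mult'[symmetric] ennreal_numeral[symmetric] del: ennreal_numeral)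
  finally show ?thesis unfolding T_def Q_def .
qed

lemma young_tangent:
  fixes x a p :: real
  assumes x: "0 \<le> x" and a: "0 \<le> a" and p: "1 \<le> p"
  shows "p * a powr (p-1) * x \<le> x powr p + (p-1) * a powr p"
proof (cases "x = 0 \<or> a = 0")
  case True then show ?thesis using p a by auto
next
  case False
  then have xa: "0 < x" "0 < a" using x a by auto
  have "(x powr p) powr (1/p) * (a powr p) powr (1 - 1/p) \<le> (1/p) * x powr p + (1 - 1/p) * a powr p"
    by (rule Youngs_inequality_0) (use p xa in \<open>auto simp: field_simps\<close>)
  moreover have "(x powr p) powr (1/p) = x" using p xa by (simp add: powr_powr)
  moreover have "(a powr p) powr (1 - 1/p) = a powr (p - 1)"
  proof -
    have "p * (1 - 1/p) = p - 1" using p by (simp add: field_simps)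
    then show ?thesis using xa by (simp add: powr_powr)
  qed
  ultimately have "x * a powr (p-1) \<le> (1/p) * x powr p + (1 - 1/p) * a powr p" by simp
  then have "p * (x * a powr (p-1)) \<le> p * ((1/p) * x powr p + (1 - 1/p) * a powr p)"
    using p by (intro mult_left_mono) auto
  moreover have "p * ((1/p) * x powr p + (1 - 1/p) * a powr p) = x powr p + (p-1) * a powr p"
    using p by (simp add: field_simps)
  moreover have "p * a powr (p-1) * x = p * (x * a powr (p-1))" by (simp only: mult_ac)
  ultimately show ?thesis by linarith
qed

lemma jensen_nn:
  fixes g :: "'a::euclidean_space \<Rightarrow> real"
  assumes gm[measurable]: "g \<in> borel_measurable borel" and g0: "\<And>z. 0 \<le> g z"
    and Q[measurable]: "Q \<in> sets borel" and mQ: "emeasure lborel Q = ennreal m" and m: "0 < m"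
    and T: "(\<integral>\<^sup>+z. ennreal (g z) * indicator Q z \<partial>lborel) = ennreal (a * m)" and a: "0 \<le> a" and p: "1 \<le> p"
  shows "ennreal (a powr p * m) \<le> (\<integral>\<^sup>+z. ennreal (g z powr p) * indicator Q z \<partial>lborel)"
proof -
  define X where "X = (\<integral>\<^sup>+z. ennreal (g z powr p) * indicator Q z \<partial>lborel)"
  have apow: "a powr (p-1) * a = a powr p"
  proof (cases "a = 0")
    case False
    have "a powr p = a powr ((p-1) + 1)" by simp
    also have "\<dots> = a powr (p-1) * a powr 1" by (rule powr_add)
    also have "\<dots> = a powr (p-1) * a" using a False by simp
    finally show ?thesis by simp
  qed (use p in auto)
  have eq: "p * a powr p * m = (p * a powr (p-1)) * (a * m)"
    by (simp only: apow[symmetric] mult_ac)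
  have "ennreal (p * a powr p * m) = ennreal ((p * a powr (p-1)) * (a * m))"
    by (simp only: eq)
  also have "\<dots> = ennreal (p * a powr (p-1)) * ennreal (a * m)"
    by (intro ennreal_mult mult_nonneg_nonneg) (use a p m in auto)
  also have "\<dots> = (\<integral>\<^sup>+z. ennreal (p * a powr (p-1)) * (ennreal (g z) * indicator Q z) \<partial>lborel)"
    by (simp add: T nn_integral_cmult)
  also have "\<dots> \<le> (\<integral>\<^sup>+z. ennreal (g z powr p) * indicator Q z + ennreal ((p-1) * a powr p) * indicator Q z \<partial>lborel)"
  proof (rule nn_integral_mono)
    fix z
    have "p * a powr (p-1) * g z \<le> g z powr p + (p-1) * a powr p"
      using young_tangent[OF g0 a p] .
    then have "ennreal (p * a powr (p-1) * g z) \<le> ennreal (g z powr p + (p-1) * a powr p)"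
      by (rule ennreal_leI)
    moreover have "ennreal (p * a powr (p-1)) * ennreal (g z) = ennreal (p * a powr (p-1) * g z)"
      by (rule ennreal_mult[symmetric]) (use p a g0[of z] in \<open>auto intro!: mult_nonneg_nonneg\<close>)
    moreover have "ennreal (g z powr p) + ennreal ((p-1) * a powr p) = ennreal (g z powr p + (p-1) * a powr p)"
      by (rule ennreal_plus[symmetric]) (use p a in auto)
    ultimately have "ennreal (p * a powr (p-1)) * ennreal (g z) \<le> ennreal (g z powr p) + ennreal ((p-1) * a powr p)"
      by simp
    then show "ennreal (p * a powr (p-1)) * (ennreal (g z) * indicator Q z) \<le> ennreal (g z powr p) * indicator Q z + ennreal ((p-1) * a powr p) * indicator Q z"
      by (cases "z \<in> Q") auto
  qed
  also have "\<dots> = X + ennreal ((p-1) * a powr p) * ennreal m"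
    unfolding X_def by (simp add: nn_integral_add nn_integral_cmult_indicator mQ)
  also have "\<dots> = X + ennreal ((p-1) * a powr p * m)"
    by (subst ennreal_mult[symmetric]) (use p a m in auto)
  finally have le: "ennreal (p * a powr p * m) \<le> X + ennreal ((p-1) * a powr p * m)" .
  show ?thesis
  proof (cases "X = \<infinity>")
    case True then show ?thesis by (simp add: X_def)
  next
    case False
    then obtain x where x: "X = ennreal x" "0 \<le> x" by (cases X) auto
    have nn2: "0 \<le> (p-1) * a powr p * m" using p a m by auto
    have "ennreal (p * a powr p * m) \<le> ennreal (x + (p-1) * a powr p * m)"
      using le x(1) ennreal_plus[OF x(2) nn2] by simp
    then have "p * a powr p * m \<le> x + (p-1) * a powr p * m"
      by (subst (asm) ennreal_le_iff) (use x nn2 in auto)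
    then have "a powr p * m \<le> x" by (simp add: algebra_simps)
    then show ?thesis using x by (simp add: X_def)
  qed
qed

lemma mvp:
  fixes f :: "complex \<Rightarrow> complex"
  assumes hol: "f holomorphic_on ball w Rr" and r: "0 < r" "2 * r < Rr" and p: "1 \<le> p"
  shows "ennreal (cmod (f w) powr p) \<le> ennreal ((32/pi) powr p / (4 * r^2)) *
     (\<integral>\<^sup>+z. ennreal (cmod (f z) powr p) * indicator (cbox (w - Complex r r) (w + Complex r r)) z \<partial>lborel)"
proof -
  define Q where "Q = cbox (w - Complex r r) (w + Complex r r)"
  define G where "G z = indicator (ball w Rr) z *\<^sub>R cmod (f z)" for z
  define m where "m = 4 * r^2"
  have m0: "0 < m" using r by (simp add: m_def)
  have fcont: "continuous_on (ball w Rr) f" using hol holomorphic_on_imp_continuous_on by blast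
  have Gm[measurable]: "G \<in> borel_measurable borel"
    unfolding G_def[abs_def]
    by (rule borel_measurable_continuous_on_indicator) (auto intro!: continuous_intros fcont)
  have G0: "0 \<le> G z" for z by (simp add: G_def)
  have Qball: "Q \<subseteq> ball w Rr"
  proof
    fix z assume "z \<in> Q"
    then have "\<bar>Re (z - w)\<bar> \<le> r" "\<bar>Im (z - w)\<bar> \<le> r" by (auto simp: Q_def in_cbox_complex_iff)
    then have "cmod (z - w) \<le> 2*r" using cmod_le[of "z - w"] by linarith
    then show "z \<in> ball w Rr" using r by (simp add: dist_norm norm_minus_commute)
  qed
  have GQ: "z \<in> Q \<Longrightarrow> G z = cmod (f z)" for z using Qball by (auto simp: G_def)
  have Qm[measurable]: "Q \<in> sets borel" by (simp add: Q_def)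
  have mQ: "emeasure lborel Q = ennreal m"
    using r by (simp add: Q_def emeasure_lborel_cbox_eq Basis_complex_def m_def power2_eq_square)
  define T where "T = (\<integral>\<^sup>+z. ennreal (G z) * indicator Q z \<partial>lborel)"
  have T_eq: "T = (\<integral>\<^sup>+z. ennreal (cmod (f z)) * indicator Q z \<partial>lborel)"
    unfolding T_def by (rule nn_integral_cong) (auto simp: GQ split: split_indicator)
  have "compact Q" by (simp add: Q_def)
  moreover have "continuous_on Q (\<lambda>z. cmod (f z))"
    by (intro continuous_intros continuous_on_subset[OF fcont Qball])
  ultimately obtain Bd where Bd: "\<And>z. z \<in> Q \<Longrightarrow> cmod (f z) \<le> Bd"
    using compact_continuous_image[of Q "\<lambda>z. cmod (f z)"] compact_imp_bounded bounded_real
    by (metis image_eqI abs_le_D1)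
  have "T \<le> (\<integral>\<^sup>+z. ennreal Bd * indicator Q z \<partial>lborel)"
    unfolding T_eq by (rule nn_integral_mono) (auto simp: Bd ennreal_leI split: split_indicator)
  also have "\<dots> = ennreal Bd * ennreal m" by (subst nn_integral_cmult_indicator) (auto simp: mQ)
  finally have "T < \<infinity>" by (auto simp: top_unique ennreal_mult_less_top intro: le_less_trans)
  then obtain t where t: "T = ennreal t" "0 \<le> t" by (cases T) auto
  define a where "a = t / m"
  have a0: "0 \<le> a" using t m0 by (simp add: a_def)
  have ta: "t = a * m" using m0 by (simp add: a_def)
  have jen: "ennreal (a powr p * m) \<le> (\<integral>\<^sup>+z. ennreal (G z powr p) * indicator Q z \<partial>lborel)"
    by (rule jensen_nn[OF Gm G0 Qm mQ m0 _ a0 p]) (simp add: T_def[symmetric] t ta)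
  also have "\<dots> = (\<integral>\<^sup>+z. ennreal (cmod (f z) powr p) * indicator Q z \<partial>lborel)"
    by (rule nn_integral_cong) (auto simp: GQ split: split_indicator)
  finally have jen: "ennreal (a powr p * m) \<le> (\<integral>\<^sup>+z. ennreal (cmod (f z) powr p) * indicator Q z \<partial>lborel)" .
  have "ennreal (cmod (f w)) \<le> ennreal (8 / (pi * r^2)) * T"
    using mv1[OF hol r] by (simp add: T_eq Q_def)
  also have "\<dots> = ennreal (8 / (pi * r^2) * t)" using t r by (subst ennreal_mult) (auto simp: t)
  finally have "cmod (f w) \<le> 8 / (pi * r^2) * t"
    using t r by (subst (asm) ennreal_le_iff) auto
  also have "8 / (pi * r^2) * t = (32/pi) * a" using r by (simp add: ta m_def field_simps)
  finally have fw: "cmod (f w) \<le> (32/pi) * a" .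
  have "cmod (f w) powr p \<le> ((32/pi) * a) powr p"
    by (rule powr_mono2) (use p fw in auto)
  also have "\<dots> = (32/pi) powr p * a powr p" using a0 by (intro powr_mult)
  also have "\<dots> = (32/pi) powr p / m * (a powr p * m)" using m0 by simp
  finally have "ennreal (cmod (f w) powr p) \<le> ennreal ((32/pi) powr p / m) * ennreal (a powr p * m)"
    using a0 m0 by (subst ennreal_mult[symmetric]) (auto intro: ennreal_leI)
  also have "\<dots> \<le> ennreal ((32/pi) powr p / m) * (\<integral>\<^sup>+z. ennreal (cmod (f z) powr p) * indicator Q z \<partial>lborel)"
    by (rule mult_left_mono[OF jen]) simp
  finally show ?thesis by (simp add: m_def Q_def)
qed

lemma wnorm_aux:
  fixes a b n :: real assumes n: "n = a^2 + b^2" "n > 0"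
  shows "(1 - a / n * a)^2 + (a / n * b)^2 = b^2 / n"
proof -
  have "1 - a / n * a = (n - a*a)/n" using n(2) by (simp add: field_simps)
  also have "n - a*a = b^2" using n(1) by (simp add: power2_eq_square)
  finally have e: "1 - a / n * a = b^2 / n" .
  have "(b^2/n)^2 + (a / n * b)^2 = b^2 * (a^2 + b^2) / n^2"
    by (simp add: power2_eq_square add_divide_distrib algebra_simps)
  also have "\<dots> = b^2 / n" using n by (simp add: power2_eq_square)
  finally show ?thesis using e by simp
qed

lemma geo1:
  fixes w1 z1 :: complex and s \<kappa> :: real
  assumes k: "0 < \<kappa>" "\<kappa> < 1" and w1: "cmod w1 < 1/2" and s: "0 \<le> s" "s < 1"
    and hz: "cmod (z1 - ((1-s) * w1 + s)) < \<kappa> * (1 - cmod ((1-s) * w1 + s))"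
    and ha: "1 - cmod ((1-s) * w1 + s) < (1-\<kappa>)/16"
  shows "\<exists>w' (\<sigma>::real). cmod w' < sqrt (((1+\<kappa>)/(1-\<kappa>))^2 / (1 + ((1+\<kappa>)/(1-\<kappa>))^2)) \<and> 0 \<le> \<sigma> \<and> \<sigma> < 1 \<and>
      z1 = complex_of_real (1-\<sigma>) * w' + complex_of_real \<sigma>"
proof -
  define \<alpha> where "\<alpha> = (1-s) * w1 + s"
  define \<delta> where "\<delta> = 1 - cmod \<alpha>"
  define v where "v = 1 - \<alpha>"
  define d where "d = \<alpha> - z1"
  define u where "u = 1 - z1"
  define T where "T = (1+\<kappa>)/(1-\<kappa>)"
  have ns: "cmod (1 - complex_of_real s) = 1 - s"
  proof -
    have "1 - complex_of_real s = complex_of_real (1 - s)" by simp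
    then show ?thesis using s by (simp only: norm_of_real)
  qed
  have uvd: "u = v + d" by (simp add: u_def v_def d_def)
  have F1: "cmod \<alpha> \<le> (1-s) * cmod w1 + s"
  proof -
    have "cmod \<alpha> \<le> cmod ((1-s) * w1) + cmod (complex_of_real s)" unfolding \<alpha>_def by (rule norm_triangle_ineq)
    also have "\<dots> = (1-s) * cmod w1 + s" using s ns by (simp add: norm_mult)
    finally show ?thesis .
  qed
  have "(1-s) * cmod w1 < (1-s) * (1/2)" using w1 s by (intro mult_strict_left_mono) auto
  then have "(1-s) * cmod w1 < (1-s)/2" by simp
  then have A1: "cmod \<alpha> < (1-s)/2 + s" using F1 by linarith
  have dpos: "\<delta> > (1-s)/2" unfolding \<delta>_def using A1 by (simp add: field_simps)
  have F2: "cmod v < 3 * \<delta>"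
  proof -
    have "v = (1-s) * (1 - w1)" by (simp add: v_def \<alpha>_def algebra_simps)
    then have "cmod v = (1-s) * cmod (1 - w1)" using s ns by (simp add: norm_mult)
    also have "\<dots> \<le> (1-s) * (1 + cmod w1)"
      using s norm_triangle_ineq4[of 1 w1] by (intro mult_left_mono) auto
    also have "\<dots> < (1-s) * (3/2)" using s w1 by (intro mult_strict_left_mono) auto
    finally show ?thesis using dpos by linarith
  qed
  have F3: "Re v \<ge> \<delta>" unfolding v_def \<delta>_def using complex_Re_le_cmod[of \<alpha>] by simp
  have F4: "\<bar>Im v\<bar> < Re v"
  proof -
    have "Im v = - ((1-s) * Im w1)" "Re v = (1-s) * (1 - Re w1)" by (simp_all add: v_def \<alpha>_def algebra_simps)
    moreover have "\<bar>Im w1\<bar> < 1 - Re w1" using w1 abs_Im_le_cmod[of w1] complex_Re_le_cmod[of w1] by linarith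
    ultimately show ?thesis using s by (simp add: abs_mult)
  qed
  have F5: "cmod d < \<kappa> * \<delta>" using hz by (simp add: d_def \<delta>_def \<alpha>_def norm_minus_commute)
  have Reu: "Re u > (1-\<kappa>) * Re v"
  proof -
    have "Re u = Re v + Re d" by (simp add: uvd)
    moreover have "Re d \<ge> - cmod d" using abs_Re_le_cmod[of d] by linarith
    moreover have "\<kappa> * \<delta> \<le> \<kappa> * Re v" using F3 k by (intro mult_left_mono) auto
    ultimately show ?thesis using F5 by (simp add: algebra_simps)
  qed
  have Imu: "\<bar>Im u\<bar> < (1+\<kappa>) * Re v"
  proof -
    have "\<bar>Im u\<bar> \<le> \<bar>Im v\<bar> + \<bar>Im d\<bar>" by (simp add: uvd abs_triangle_ineq)
    moreover have "\<bar>Im d\<bar> \<le> cmod d" by (rule abs_Im_le_cmod)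
    moreover have "\<kappa> * \<delta> \<le> \<kappa> * Re v" using F3 k by (intro mult_left_mono) auto
    ultimately show ?thesis using F4 F5 by (simp add: algebra_simps)
  qed
  have "0 < (1-s)/2" using s by simp
  then have d0: "\<delta> > 0" using dpos by (rule less_trans)
  have Reu0: "Re u > 0" using Reu F3 d0 k by (smt (verit) mult_pos_pos)
  have ImT: "\<bar>Im u\<bar> < T * Re u"
  proof -
    have "(1+\<kappa>) * Re v = T * ((1-\<kappa>) * Re v)" using k by (simp add: T_def)
    also have "\<dots> \<le> T * Re u" using Reu k by (intro mult_left_mono) (auto simp: T_def)
    finally show ?thesis using Imu by linarith
  qed
  have normu: "cmod u < 4 * \<delta>"
  proof -
    have "cmod u \<le> cmod v + cmod d" by (simp add: uvd norm_triangle_ineq)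
    moreover have "\<kappa> * \<delta> < 1 * \<delta>" using k d0 by (intro mult_strict_right_mono) auto
    ultimately show ?thesis using F2 F5 by linarith
  qed
  have u0: "u \<noteq> 0" using Reu0 by auto
  have nu2: "(cmod u)^2 \<le> Re u"
  proof -
    have "(cmod u)^2 \<le> (4*\<delta>)^2" using normu by (intro power_mono) auto
    also have "\<dots> = 16 * \<delta> * \<delta>" by (simp add: power2_eq_square)
    also have "\<dots> \<le> (1-\<kappa>) * \<delta>" using ha d0 unfolding \<delta>_def \<alpha>_def
      by (intro mult_right_mono) (auto simp: \<alpha>_def)
    also have "\<dots> \<le> (1-\<kappa>) * Re v" using F3 k by (intro mult_left_mono) auto
    finally show ?thesis using Reu by linarith
  qed
  define t where "t = Re u / (cmod u)^2"
  have nu2pos: "(cmod u)^2 > 0" using u0 by simp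
  have t1: "t \<ge> 1" using nu2 nu2pos by (simp add: t_def)
  define \<sigma> where "\<sigma> = 1 - 1/t"
  define w' where "w' = 1 - t * u"
  have "z1 = complex_of_real (1-\<sigma>) * w' + complex_of_real \<sigma>"
    using t1 by (simp add: \<sigma>_def w'_def u_def field_simps)
  moreover have "0 \<le> \<sigma>" "\<sigma> < 1" using t1 by (auto simp: \<sigma>_def)
  moreover have "cmod w' < sqrt (T^2 / (1 + T^2))"
  proof -
    have cu: "(cmod u)^2 = (Re u)^2 + (Im u)^2" by (simp add: cmod_power2)
    have "(cmod w')^2 = (1 - t * Re u)^2 + (t * Im u)^2" by (simp add: w'_def cmod_power2)
    also have "\<dots> = (Im u)^2 / (cmod u)^2"
      unfolding t_def by (rule wnorm_aux[OF cu nu2pos])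
    finally have w2: "(cmod w')^2 = (Im u)^2 / (cmod u)^2" .
    have T0: "T > 0" using k by (simp add: T_def)
    have "\<bar>Im u\<bar>^2 < (T * Re u)^2" by (rule power_strict_mono[OF ImT]) auto
    then have "(Im u)^2 < (T * Re u)^2" by simp
    then have "(Im u)^2 * (1 + T^2) < T^2 * (cmod u)^2" unfolding cu by (simp add: algebra_simps power_mult_distrib)
    moreover have p1: "0 < 1 + T^2" by (metis add_pos_nonneg zero_less_one zero_le_power2)
    ultimately have "(Im u)^2 < T^2 * (cmod u)^2 / (1 + T^2)" by (subst pos_less_divide_eq) auto
    also have "T^2 * (cmod u)^2 / (1 + T^2) = T^2 / (1 + T^2) * (cmod u)^2" by (rule times_divide_eq_left[symmetric])
    finally have "(Im u)^2 < T^2 / (1 + T^2) * (cmod u)^2" .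
    then have "(Im u)^2 / (cmod u)^2 < T^2 / (1 + T^2)"
      by (simp only: pos_divide_less_eq[OF nu2pos])
    then have "(cmod w')^2 < T^2 / (1 + T^2)" using w2 by simp
    then show ?thesis by (rule real_less_rsqrt)
  qed
  ultimately have "\<exists>w' (\<sigma>::real). cmod w' < sqrt (T^2 / (1 + T^2)) \<and> 0 \<le> \<sigma> \<and> \<sigma> < 1 \<and> z1 = complex_of_real (1-\<sigma>) * w' + complex_of_real \<sigma>"
    by blast
  then show ?thesis by (simp only: T_def)
qed

lemma cmod_1_minus_of_real [simp]: "cmod (1 - complex_of_real s) = \<bar>1 - s\<bar>"
  by (metis norm_of_real of_real_1 of_real_diff)

lemma Gamma_D:
  assumes "z \<in> Gamma_reg \<beta> \<xi>"
  shows "cmod z < \<beta> \<or> (\<exists>w (s::real). cmod w < \<beta> \<and> 0 \<le> s \<and> s < 1 \<and> z = of_real (1-s) * w + of_real s * \<xi>)"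
proof -
  { assume "\<not> cmod z < \<beta>"
    then obtain w where w: "cmod w < \<beta>" "z \<in> closed_segment w \<xi>" "z \<noteq> \<xi>"
      using assms by (auto simp: Gamma_reg_def)
    then obtain u where u: "0 \<le> u" "u \<le> 1" "z = (1 - u) *\<^sub>R w + u *\<^sub>R \<xi>" by (auto simp: in_segment)
    have "u \<noteq> 1" using u w(3) by auto
    then have "\<exists>w (s::real). cmod w < \<beta> \<and> 0 \<le> s \<and> s < 1 \<and> z = of_real (1-s) * w + of_real s * \<xi>"
      using u w(1) by (intro exI[of _ w] exI[of _ u]) (auto simp: scaleR_conv_of_real)
  }
  then show ?thesis by blast
qed

lemma Gamma_I:
  assumes "cmod \<xi> = 1" "\<beta> \<le> 1" "cmod w < \<beta>" "0 \<le> s" "s < 1" "z = of_real (1-s) * w + of_real s * \<xi>"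
  shows "z \<in> Gamma_reg \<beta> \<xi>"
proof -
  have "z \<in> closed_segment w \<xi>" using assms(4,5,6) by (auto simp: in_segment scaleR_conv_of_real intro!: exI[of _ s])
  moreover have "z \<noteq> \<xi>"
  proof
    assume "z = \<xi>"
    then have "of_real (1-s) * (w - \<xi>) = 0" using assms(6) by (simp add: algebra_simps)
    then have "w = \<xi>" using assms(5) by simp
    then show False using assms(1-3) by simp
  qed
  ultimately show ?thesis using assms(3) unfolding Gamma_reg_def by blast
qed

lemma Gamma_disc: "cmod z < \<beta> \<Longrightarrow> z \<in> Gamma_reg \<beta> \<xi>"
  by (simp add: Gamma_reg_def)

lemma Gamma_in_disc:
  assumes "cmod \<xi> = 1" "\<beta> \<le> 1" "z \<in> Gamma_reg \<beta> \<xi>"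
  shows "cmod z < 1"
proof -
  from Gamma_D[OF assms(3)] show ?thesis
  proof
    assume "cmod z < \<beta>" then show ?thesis using assms by simp
  next
    assume "\<exists>w (s::real). cmod w < \<beta> \<and> 0 \<le> s \<and> s < 1 \<and> z = of_real (1-s) * w + of_real s * \<xi>"
    then obtain w s where ws: "cmod w < \<beta>" "0 \<le> s" "s < 1" "z = of_real (1-s) * w + of_real s * \<xi>" by blast
    have "cmod z \<le> cmod (of_real (1-s) * w) + cmod (of_real s * \<xi>)" unfolding ws(4) by (rule norm_triangle_ineq)
    also have "\<dots> = (1-s) * cmod w + s" using ws assms(1) by (simp add: norm_mult)
    also have "\<dots> < (1-s) * 1 + s" using ws assms(2) by (intro add_strict_right_mono mult_strict_left_mono) auto
    finally show ?thesis by simp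
  qed
qed

lemma Gamma_open:
  assumes "cmod \<xi> = 1" "0 < \<beta>" "\<beta> \<le> 1"
  shows "open (Gamma_reg \<beta> \<xi>)"
proof -
  have eq: "Gamma_reg \<beta> \<xi> = (\<Union>s\<in>{0..<1::real}. (\<lambda>w. s *\<^sub>R \<xi> + (1-s) *\<^sub>R w) ` ball 0 \<beta>)"
  proof
    show "Gamma_reg \<beta> \<xi> \<subseteq> (\<Union>s\<in>{0..<1::real}. (\<lambda>w. s *\<^sub>R \<xi> + (1-s) *\<^sub>R w) ` ball 0 \<beta>)"
    proof
      fix z assume z: "z \<in> Gamma_reg \<beta> \<xi>"
      from Gamma_D[OF z] show "z \<in> (\<Union>s\<in>{0..<1::real}. (\<lambda>w. s *\<^sub>R \<xi> + (1-s) *\<^sub>R w) ` ball 0 \<beta>)"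
      proof
        assume "cmod z < \<beta>" then show ?thesis by (intro UN_I[of 0]) auto
      next
        assume "\<exists>w (s::real). cmod w < \<beta> \<and> 0 \<le> s \<and> s < 1 \<and> z = of_real (1-s) * w + of_real s * \<xi>"
        then obtain w s where ws: "cmod w < \<beta>" "0 \<le> s" "s < 1" "z = of_real (1-s) * w + of_real s * \<xi>" by blast
        show ?thesis using ws by (intro UN_I[of s]) (auto simp: scaleR_conv_of_real algebra_simps)
      qed
    qed
  next
    show "(\<Union>s\<in>{0..<1::real}. (\<lambda>w. s *\<^sub>R \<xi> + (1-s) *\<^sub>R w) ` ball 0 \<beta>) \<subseteq> Gamma_reg \<beta> \<xi>"
    proof (clarify)
      fix s :: real and w :: complex assume s: "s \<in> {0..<1}" and w: "w \<in> ball 0 \<beta>"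
      show "s *\<^sub>R \<xi> + (1-s) *\<^sub>R w \<in> Gamma_reg \<beta> \<xi>"
        by (rule Gamma_I[OF assms(1,3), of w s]) (use s w in \<open>auto simp: scaleR_conv_of_real algebra_simps\<close>)
    qed
  qed
  show ?thesis unfolding eq
    by (intro open_UN ballI open_affinity open_ball) auto
qed

lemma geo:
  fixes \<kappa> \<beta> :: real
  assumes k: "0 < \<kappa>" "\<kappa> < 1" and \<xi>: "cmod \<xi> = 1" and \<alpha>: "\<alpha> \<in> Gamma_reg (1/2) \<xi>"
    and hz: "cmod (z - \<alpha>) < \<kappa> * (1 - cmod \<alpha>)"
    and b1: "\<kappa> + (1-\<kappa>) * (1 - (1-\<kappa>)/16) \<le> \<beta>"
    and b2: "sqrt (((1+\<kappa>)/(1-\<kappa>))^2 / (1 + ((1+\<kappa>)/(1-\<kappa>))^2)) \<le> \<beta>" and b3: "\<beta> \<le> 1"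
  shows "z \<in> Gamma_reg \<beta> \<xi>"
proof (cases "cmod \<alpha> \<le> 1 - (1-\<kappa>)/16")
  case True
  have "cmod z \<le> cmod \<alpha> + cmod (z - \<alpha>)" by (metis norm_triangle_sub add.commute)
  also have "\<dots> < cmod \<alpha> + \<kappa> * (1 - cmod \<alpha>)" using hz by simp
  also have "\<dots> = \<kappa> + (1-\<kappa>) * cmod \<alpha>" by (simp add: algebra_simps)
  also have "\<dots> \<le> \<kappa> + (1-\<kappa>) * (1 - (1-\<kappa>)/16)" using True k by (intro add_left_mono mult_left_mono) auto
  finally show ?thesis using b1 by (intro Gamma_disc) simp
next
  case False
  have half: "1/2 \<le> 1 - (1-\<kappa>)/16" using k by simp
  have h: "1 - (1-\<kappa>)/16 < cmod \<alpha>" using False by simp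
  have "1/2 < cmod \<alpha>" using order.strict_trans1[OF half h] .
  then have "\<not> cmod \<alpha> < 1/2" by simp
  with Gamma_D[OF \<alpha>] obtain w s where ws: "cmod w < 1/2" "0 \<le> s" "s < 1"
    "\<alpha> = of_real (1-s) * w + of_real s * \<xi>" by blast
  have cc: "cnj \<xi> * \<xi> = 1"
    using complex_norm_square[of \<xi>] \<xi> by (simp add: mult.commute)
  define w1 z1 where "w1 = cnj \<xi> * w" and "z1 = cnj \<xi> * z"
  have a1: "cnj \<xi> * \<alpha> = of_real (1-s) * w1 + of_real s"
    using cc by (simp add: ws(4) w1_def algebra_simps)
  have nc: "cmod (cnj \<xi>) = 1" using \<xi> by simp
  have na: "cmod (of_real (1-s) * w1 + of_real s) = cmod \<alpha>"
    using a1[symmetric] nc by (simp add: norm_mult)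
  have nz: "cmod (z1 - (of_real (1-s) * w1 + of_real s)) = cmod (z - \<alpha>)"
    using a1[symmetric] nc by (simp add: z1_def norm_mult right_diff_distrib[symmetric])
  have nw: "cmod w1 < 1/2" using ws(1) nc by (simp add: w1_def norm_mult)
  have hz1: "cmod (z1 - (of_real (1-s) * w1 + of_real s)) < \<kappa> * (1 - cmod (of_real (1-s) * w1 + of_real s))"
    unfolding nz na by (rule hz)
  have ha1: "1 - cmod (of_real (1-s) * w1 + of_real s) < (1-\<kappa>)/16"
    unfolding na using h by linarith
  obtain w' and \<sigma> :: real where wsig: "cmod w' < sqrt (((1+\<kappa>)/(1-\<kappa>))^2 / (1 + ((1+\<kappa>)/(1-\<kappa>))^2))"
    "0 \<le> \<sigma>" "\<sigma> < 1" "z1 = complex_of_real (1-\<sigma>) * w' + complex_of_real \<sigma>"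
    using geo1[OF k nw ws(2,3) hz1 ha1] by blast
  have zz: "z = \<xi> * z1" using cc by (simp add: z1_def mult.assoc[symmetric] mult.commute)
  show ?thesis
  proof (rule Gamma_I[OF \<xi> b3, of "\<xi> * w'" \<sigma>])
    show "cmod (\<xi> * w') < \<beta>" using wsig(1) b2 \<xi> by (simp add: norm_mult)
    show "z = of_real (1-\<sigma>) * (\<xi> * w') + of_real \<sigma> * \<xi>"
      unfolding zz wsig(4) by (simp add: algebra_simps)
  qed (use wsig in auto)
qed

lemma in_unit_disc: "z \<in> unit_disc \<longleftrightarrow> cmod z < 1"
  by (simp add: unit_disc_def)

lemma P1:
  fixes f :: "complex \<Rightarrow> complex"
  assumes hol: "f holomorphic_on unit_disc" and e: "0 < \<eta>" "\<eta> < 1" and p: "1 \<le> p"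
    and \<alpha>: "\<alpha> \<in> unit_disc" and w: "w \<in> Delta \<eta> \<alpha>"
  shows "ennreal (cmod (f w) powr p) \<le> ennreal ((32/pi) powr p / (4 * ((1-\<eta>)/4 * (1 - cmod \<alpha>))^2)) *
    (\<integral>\<^sup>+z. ennreal (cmod (f z) powr p) * indicator unit_disc z * indicator (ball \<alpha> ((1+\<eta>)/2 * (1 - cmod \<alpha>))) z \<partial>lborel)"
proof -
  define \<delta> where "\<delta> = 1 - cmod \<alpha>"
  have d0: "0 < \<delta>" using \<alpha> by (simp add: \<delta>_def in_unit_disc)
  define r where "r = (1-\<eta>)/4 * \<delta>"
  define Rr where "Rr = (1-\<eta>) * \<delta>"
  have r0: "0 < r" using e d0 by (simp add: r_def)
  have rR: "2 * r < Rr" using e d0 by (simp add: r_def Rr_def)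
  have wa: "cmod (w - \<alpha>) < \<eta> * \<delta>" using w by (simp add: Delta_def \<delta>_def)
  have ballsub: "ball w Rr \<subseteq> unit_disc"
  proof
    fix z assume "z \<in> ball w Rr"
    then have "cmod (z - w) < Rr" by (simp add: dist_norm norm_minus_commute)
    moreover have "cmod z \<le> cmod \<alpha> + cmod (w - \<alpha>) + cmod (z - w)"
    proof -
      have "cmod z \<le> cmod (\<alpha> + (w - \<alpha>)) + cmod (z - w)" using norm_triangle_ineq[of "\<alpha> + (w - \<alpha>)" "z - w"] by simp
      moreover have "cmod (\<alpha> + (w - \<alpha>)) \<le> cmod \<alpha> + cmod (w - \<alpha>)" by (rule norm_triangle_ineq)
      ultimately show ?thesis by linarith
    qed
    ultimately have "cmod z < cmod \<alpha> + \<eta> * \<delta> + (1-\<eta>) * \<delta>" using wa by (simp add: Rr_def)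
    also have "\<dots> = 1" by (simp add: \<delta>_def algebra_simps)
    finally show "z \<in> unit_disc" by (simp add: in_unit_disc)
  qed
  have mv: "ennreal (cmod (f w) powr p) \<le> ennreal ((32/pi) powr p / (4 * r^2)) *
     (\<integral>\<^sup>+z. ennreal (cmod (f z) powr p) * indicator (cbox (w - Complex r r) (w + Complex r r)) z \<partial>lborel)"
    by (rule mvp[OF holomorphic_on_subset[OF hol ballsub] r0 rR p])
  have Qsub: "z \<in> unit_disc \<and> z \<in> ball \<alpha> ((1+\<eta>)/2 * \<delta>)" if z: "z \<in> cbox (w - Complex r r) (w + Complex r r)" for z
  proof -
    have "\<bar>Re (z - w)\<bar> \<le> r" "\<bar>Im (z - w)\<bar> \<le> r" using z by (auto simp: in_cbox_complex_iff)
    then have zw: "cmod (z - w) \<le> 2 * r" using cmod_le[of "z - w"] by linarith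
    then have "z \<in> ball w Rr" using rR by (simp add: dist_norm norm_minus_commute)
    then have zd: "z \<in> unit_disc" using ballsub by blast
    have tri: "cmod (z - \<alpha>) \<le> cmod (w - \<alpha>) + cmod (z - w)"
      using norm_triangle_ineq[of "w - \<alpha>" "z - w"] by simp
    have zw2: "cmod (z - w) \<le> (1-\<eta>)/2 * \<delta>" using zw by (simp add: r_def mult.commute)
    have "cmod (z - \<alpha>) < \<eta> * \<delta> + (1-\<eta>)/2 * \<delta>"
      using add_less_le_mono[OF wa zw2] tri by simp
    moreover have eqk: "\<eta> * \<delta> + (1-\<eta>)/2 * \<delta> = (1+\<eta>)/2 * \<delta>" by (simp add: field_simps)
    ultimately have "cmod (z - \<alpha>) < (1+\<eta>)/2 * \<delta>" by simp
    with zd show ?thesis by (simp add: dist_norm norm_minus_commute)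
  qed
  have "(\<integral>\<^sup>+z. ennreal (cmod (f z) powr p) * indicator (cbox (w - Complex r r) (w + Complex r r)) z \<partial>lborel)
     \<le> (\<integral>\<^sup>+z. ennreal (cmod (f z) powr p) * indicator unit_disc z * indicator (ball \<alpha> ((1+\<eta>)/2 * \<delta>)) z \<partial>lborel)"
    by (rule nn_integral_mono) (auto split: split_indicator dest: Qsub)
  then have "ennreal ((32/pi) powr p / (4 * r^2)) * (\<integral>\<^sup>+z. ennreal (cmod (f z) powr p) * indicator (cbox (w - Complex r r) (w + Complex r r)) z \<partial>lborel)
     \<le> ennreal ((32/pi) powr p / (4 * r^2)) * (\<integral>\<^sup>+z. ennreal (cmod (f z) powr p) * indicator unit_disc z * indicator (ball \<alpha> ((1+\<eta>)/2 * \<delta>)) z \<partial>lborel)"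
    by (rule mult_left_mono) simp
  with mv show ?thesis by (simp add: r_def \<delta>_def)
qed

lemma ennreal_div_le:
  fixes X Y A :: ennreal
  assumes "X \<le> A * Y"
  shows "X / Y \<le> A"
proof (cases "Y = 0")
  case True then show ?thesis using assms by simp
next
  case False
  show ?thesis
  proof (cases "Y = \<infinity>")
    case True then show ?thesis by (simp add: ennreal_divide_top)
  next
    case nt: False
    have "X / Y \<le> A * Y / Y" by (rule divide_right_mono_ennreal[OF assms])
    also have "\<dots> = A" using False nt by (simp add: mult.commute ennreal_mult_divide_eq)
    finally show ?thesis .
  qed
qed

lemma P2:
  fixes f :: "complex \<Rightarrow> complex"
  assumes hol: "f holomorphic_on unit_disc" and e: "0 < \<eta>" "\<eta> < 1" and p: "1 \<le> p"
    and \<alpha>: "\<alpha> \<in> unit_disc"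
  shows "B_avg p \<eta> lam f \<alpha> \<le> ennreal ((32/pi) powr p / (4 * ((1-\<eta>)/4 * (1 - cmod \<alpha>))^2)) *
    (\<integral>\<^sup>+z. ennreal (cmod (f z) powr p) * indicator unit_disc z * indicator (ball \<alpha> ((1+\<eta>)/2 * (1 - cmod \<alpha>))) z \<partial>lborel)"
    (is "_ \<le> ?A")
proof -
  define E where "E = E_set p \<eta> lam f \<alpha>"
  define g where "g z = indicator unit_disc z *\<^sub>R cmod (f z)" for z
  have fcont: "continuous_on unit_disc f" using hol holomorphic_on_imp_continuous_on by blast
  have gm[measurable]: "g \<in> borel_measurable borel"
    unfolding g_def[abs_def]
    by (rule borel_measurable_continuous_on_indicator) (auto simp: unit_disc_def intro!: continuous_intros fcont[unfolded unit_disc_def])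
  have Deq: "Delta \<eta> \<alpha> = unit_disc \<inter> ball \<alpha> (\<eta> * (1 - cmod \<alpha>))"
    by (auto simp: Delta_def dist_norm norm_minus_commute)
  have Eeq: "E = Delta \<eta> \<alpha> \<inter> {z. lam * cmod (f \<alpha>) powr p \<le> g z powr p}"
    by (auto simp: E_def E_set_def g_def Delta_def)
  have Em[measurable]: "E \<in> sets borel"
    unfolding Eeq Deq by (simp add: unit_disc_def)
  have Esub: "E \<subseteq> Delta \<eta> \<alpha>" by (auto simp: E_def E_set_def)
  define X where "X = (\<integral>\<^sup>+z. ennreal (cmod (f z) powr p) * indicator E z \<partial>lborel)"
  define Y where "Y = emeasure lborel E"
  have "X \<le> (\<integral>\<^sup>+z. ?A * indicator E z \<partial>lborel)"
    unfolding X_def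
  proof (rule nn_integral_mono)
    fix z
    show "ennreal (cmod (f z) powr p) * indicator E z \<le> ?A * indicator E z"
    proof (cases "z \<in> E")
      case True
      then have "z \<in> Delta \<eta> \<alpha>" using Esub by blast
      then show ?thesis using P1[OF hol e p \<alpha>] True by simp
    qed simp
  qed
  also have "\<dots> = ?A * Y" unfolding Y_def by (simp add: nn_integral_cmult_indicator)
  finally have XY: "X \<le> ?A * Y" .
  have "B_avg p \<eta> lam f \<alpha> = (X / ennreal pi) / (Y / ennreal pi)"
    by (simp add: B_avg_def area_int_def area_m_def X_def Y_def E_def)
  also have "\<dots> \<le> ?A"
  proof (rule ennreal_div_le)
    have "X / ennreal pi \<le> (?A * Y) / ennreal pi" by (rule divide_right_mono_ennreal[OF XY])
    also have "\<dots> = ?A * (Y / ennreal pi)" by (simp add: ennreal_times_divide)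
    finally show "X / ennreal pi \<le> ?A * (Y / ennreal pi)" .
  qed
  finally show ?thesis .
qed

lemma ball_ind_meas:
  "(\<lambda>x::complex\<times>complex. indicator (ball (snd x) (c * (1 - cmod (snd x)))) (fst x) :: ennreal) \<in> borel_measurable borel"
proof -
  have "open {x::complex\<times>complex. dist (snd x) (fst x) < c * (1 - cmod (snd x))}"
    by (intro open_Collect_less continuous_intros)
  then have "{x::complex\<times>complex. dist (snd x) (fst x) < c * (1 - cmod (snd x))} \<in> sets borel" by simp
  then have "(\<lambda>x. indicator {x::complex\<times>complex. dist (snd x) (fst x) < c * (1 - cmod (snd x))} x :: ennreal) \<in> borel_measurable borel"
    by (rule borel_measurable_indicator)
  moreover have "(\<lambda>x::complex\<times>complex. indicator (ball (snd x) (c * (1 - cmod (snd x)))) (fst x) :: ennreal)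
      = (\<lambda>x. indicator {x::complex\<times>complex. dist (snd x) (fst x) < c * (1 - cmod (snd x))} x)"
    by (auto simp: indicator_def mem_ball)
  ultimately show ?thesis by simp
qed

lemma emeasure_ball_le: "emeasure lborel (ball (z::complex) \<rho>) \<le> ennreal (4 * \<rho>^2)"
proof (cases "\<rho> \<le> 0")
  case True then have "ball z \<rho> = {}" by simp
  then have "emeasure lborel (ball z \<rho>) = 0" by (simp only: emeasure_empty)
  then show ?thesis by simp
next
  case False
  have "ball z \<rho> \<subseteq> cbox (z - Complex \<rho> \<rho>) (z + Complex \<rho> \<rho>)"
  proof
    fix y assume "y \<in> ball z \<rho>"
    then have "cmod (y - z) < \<rho>" by (simp add: dist_norm norm_minus_commute)
    then have "\<bar>Re (y - z)\<bar> \<le> \<rho>" "\<bar>Im (y - z)\<bar> \<le> \<rho>"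
      using abs_Re_le_cmod[of "y - z"] abs_Im_le_cmod[of "y - z"] by linarith+
    then show "y \<in> cbox (z - Complex \<rho> \<rho>) (z + Complex \<rho> \<rho>)" by (auto simp: in_cbox_complex_iff)
  qed
  then have "emeasure lborel (ball z \<rho>) \<le> emeasure lborel (cbox (z - Complex \<rho> \<rho>) (z + Complex \<rho> \<rho>))"
    by (intro emeasure_mono) auto
  also have "\<dots> = ennreal (4 * \<rho>^2)"
    using False by (simp add: emeasure_lborel_cbox_eq Basis_complex_def power2_eq_square)
  finally show ?thesis .
qed

theorem lemma3:
  fixes p \<eta> :: real
  assumes "1 \<le> p" and "0 < \<eta>" and "\<eta> < 1"
  shows "\<exists>\<beta> C2. 1/2 < \<beta> \<and> \<beta> < 1 \<and> C2 > 0 \<and>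
    (\<forall>\<epsilon> lam (f :: complex \<Rightarrow> complex) \<xi>.
       0 < \<epsilon> \<and> \<epsilon> < 1 \<and> 0 < lam \<and> lam < 2 powr (- p) \<and>
       f holomorphic_on unit_disc \<and> cmod \<xi> = 1 \<longrightarrow>
       (let B = {\<alpha> \<in> unit_disc.
                   ennreal (cmod (f \<alpha>) powr p) < ennreal (\<epsilon> powr (2 + 2 / p)) * B_avg p \<eta> lam f \<alpha>}
        in area_int (B \<inter> Gamma_reg (1/2) \<xi>) (\<lambda>z. cmod (f z) powr p / (1 - cmod z))
           \<le> ennreal (\<epsilon> * C2) * area_int (Gamma_reg \<beta> \<xi>) (\<lambda>z. cmod (f z) powr p / (1 - cmod z))))"
proof -
  note p = assms(1) and e = assms(2,3)
  define \<kappa> where "\<kappa> = (1+\<eta>)/2"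
  define T where "T = (1+\<kappa>)/(1-\<kappa>)"
  define \<beta> where "\<beta> = max (3/4) (max (\<kappa> + (1-\<kappa>)*(1-(1-\<kappa>)/16)) (sqrt (T^2/(1+T^2))))"
  define c2 where "c2 = (1-\<eta>)/4"
  define K1 where "K1 = (32/pi) powr p / (4 * c2^2)"
  define \<kappa>' where "\<kappa>' = \<kappa>/(1-\<kappa>)"
  define C2 where "C2 = K1 * (1+\<kappa>)^3 * (4 * \<kappa>'^2)"
  have k: "0 < \<kappa>" "\<kappa> < 1" using e by (auto simp: \<kappa>_def)
  have T0: "0 < T" using k by (simp add: T_def)
  have b34: "3/4 \<le> \<beta>" unfolding \<beta>_def by (rule max.cobounded1)
  have b12: "1/2 < \<beta>" by (rule order.strict_trans2[OF _ b34]) simp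
  have sq1: "sqrt (T^2/(1+T^2)) < 1"
  proof -
    have "T^2/(1+T^2) < 1" by (simp add: add_pos_nonneg)
    then show ?thesis by simp
  qed
  have r1: "\<kappa> + (1-\<kappa>)*(1-(1-\<kappa>)/16) < 1"
  proof -
    have "0 < (1-\<kappa>) * ((1-\<kappa>)/16)" using k by simp
    then show ?thesis by (simp add: algebra_simps)
  qed
  have b1: "\<beta> < 1" using sq1 r1 by (simp add: \<beta>_def)
  have c20: "0 < c2" using e by (simp add: c2_def)
  have K10: "0 < K1" using c20 by (simp add: K1_def)
  have k'0: "0 < \<kappa>'" using k by (simp add: \<kappa>'_def)
  have C20: "0 < C2" using K10 k k'0 by (simp add: C2_def)
  have main: "area_int ({\<alpha> \<in> unit_disc.
                   ennreal (cmod (f \<alpha>) powr p) < ennreal (\<epsilon> powr (2 + 2 / p)) * B_avg p \<eta> lam f \<alpha>} \<inter> Gamma_reg (1/2) \<xi>) (\<lambda>z. cmod (f z) powr p / (1 - cmod z))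
           \<le> ennreal (\<epsilon> * C2) * area_int (Gamma_reg \<beta> \<xi>) (\<lambda>z. cmod (f z) powr p / (1 - cmod z))"
    if H: "0 < \<epsilon> \<and> \<epsilon> < 1 \<and> 0 < lam \<and> lam < 2 powr (- p) \<and> f holomorphic_on unit_disc \<and> cmod \<xi> = 1"
    for \<epsilon> lam :: real and f :: "complex \<Rightarrow> complex" and \<xi> :: complex
  proof -
    from H have eps: "0 < \<epsilon>" "\<epsilon> < 1" and hol: "f holomorphic_on unit_disc" and \<xi>: "cmod \<xi> = 1" by auto
    define B where "B = {\<alpha> \<in> unit_disc.
                   ennreal (cmod (f \<alpha>) powr p) < ennreal (\<epsilon> powr (2 + 2 / p)) * B_avg p \<eta> lam f \<alpha>}"
    define G1 where "G1 z = cmod (f z) powr p / (1 - cmod z)" for z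
    have pf: "0 < p" using p by simp
    define \<epsilon>' where "\<epsilon>' = \<epsilon> powr (2 + 2 / p)"
    have e'0: "0 \<le> \<epsilon>'" by (simp add: \<epsilon>'_def)
    have e'le: "\<epsilon>' \<le> \<epsilon>"
    proof -
      have "\<epsilon> powr (2 + 2/p) \<le> \<epsilon> powr 1"
        by (rule powr_mono') (use eps pf in auto)
      then show ?thesis using eps by (simp add: \<epsilon>'_def)
    qed
    have fcont: "continuous_on unit_disc f" using hol holomorphic_on_imp_continuous_on by blast
    define g where "g z = indicator unit_disc z *\<^sub>R cmod (f z)" for z
    have gm[measurable]: "g \<in> borel_measurable borel"
      unfolding g_def[abs_def]
      by (rule borel_measurable_continuous_on_indicator) (auto simp: unit_disc_def intro!: continuous_intros fcont[unfolded unit_disc_def])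
    have gD: "z \<in> unit_disc \<Longrightarrow> g z = cmod (f z)" for z by (simp add: g_def)
    define F where "F z = ennreal (g z powr p)" for z
    have Fm[measurable]: "F \<in> borel_measurable borel" unfolding F_def[abs_def] by measurable
    have Fd: "ennreal (cmod (f z) powr p) * indicator unit_disc z = F z" for z
      by (cases "z \<in> unit_disc") (auto simp: F_def g_def)
    define Gb where "Gb = Gamma_reg \<beta> \<xi>"
    have b0: "0 < \<beta>" "\<beta> \<le> 1" using b12 b1 by auto
    have Gbm[measurable]: "Gb \<in> sets borel" unfolding Gb_def using Gamma_open[OF \<xi> b0] by simp
    have Gbd: "z \<in> Gb \<Longrightarrow> cmod z < 1" for z unfolding Gb_def using Gamma_in_disc[OF \<xi> b0(2)] by blast
    define G1' where "G1' z = g z powr p / (1 - cmod z)" for z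
    have G1'm[measurable]: "G1' \<in> borel_measurable borel" unfolding G1'_def[abs_def] by measurable
    define \<Psi> where "\<Psi> x = ennreal (\<epsilon>' * K1 * (1+\<kappa>)^3 / (1 - cmod (snd x))^3) * F (snd x) * indicator Gb (snd x)
        * indicator (ball (snd x) (\<kappa>' * (1 - cmod (snd x)))) (fst x)" for x :: "complex \<times> complex"
    have bim[measurable]: "(\<lambda>x::complex\<times>complex. indicator (ball (snd x) (\<kappa>' * (1 - cmod (snd x)))) (fst x) :: ennreal) \<in> borel_measurable borel"
      by (rule ball_ind_meas)
    have sndm: "(snd :: complex\<times>complex \<Rightarrow> complex) \<in> borel_measurable borel"
      by (intro borel_measurable_continuous_onI continuous_intros)
    have m2[measurable]: "(\<lambda>x::complex\<times>complex. F (snd x)) \<in> borel_measurable borel"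
      using measurable_compose[OF sndm Fm] by (simp add: o_def)
    have m3[measurable]: "(\<lambda>x::complex\<times>complex. indicator Gb (snd x) :: ennreal) \<in> borel_measurable borel"
      using measurable_compose[OF sndm borel_measurable_indicator[OF Gbm]] by (simp add: o_def)
    have m1[measurable]: "(\<lambda>x::complex\<times>complex. ennreal (\<epsilon>' * K1 * (1+\<kappa>)^3 / (1 - cmod (snd x))^3)) \<in> borel_measurable borel"
      using measurable_compose[OF sndm, of "\<lambda>z. ennreal (\<epsilon>' * K1 * (1+\<kappa>)^3 / (1 - cmod z)^3)"] by (simp add: o_def)
    have \<Psi>m: "\<Psi> \<in> borel_measurable borel" unfolding \<Psi>_def[abs_def]
      by (intro borel_measurable_times_ennreal m1 m2 m3 bim)
    have s1: "ennreal (G1 a) * indicator (B \<inter> Gamma_reg (1/2) \<xi>) a \<le> (\<integral>\<^sup>+z. \<Psi> (a, z) \<partial>lborel)" for a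
    proof (cases "a \<in> B \<inter> Gamma_reg (1/2) \<xi>")
      case False then show ?thesis by simp
    next
      case True
      then have aB: "a \<in> B" and aG: "a \<in> Gamma_reg (1/2) \<xi>" by auto
      have ad: "a \<in> unit_disc" using aB by (simp add: B_def)
      define \<delta> where "\<delta> = 1 - cmod a"
      have d0: "0 < \<delta>" using ad by (simp add: \<delta>_def unit_disc_def)
      define I where "I = (\<integral>\<^sup>+z. F z * indicator (ball a (\<kappa> * \<delta>)) z \<partial>lborel)"
      have Ieq: "(\<integral>\<^sup>+z. ennreal (cmod (f z) powr p) * indicator unit_disc z * indicator (ball a ((1+\<eta>)/2 * (1 - cmod a))) z \<partial>lborel) = I"
        unfolding I_def by (rule nn_integral_cong) (simp add: Fd \<kappa>_def \<delta>_def)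
      have Keq: "(32/pi) powr p / (4 * ((1-\<eta>)/4 * (1 - cmod a))^2) = K1 / \<delta>^2"
      proof -
        have "((1-\<eta>)/4 * (1 - cmod a))^2 = c2^2 * \<delta>^2" by (simp only: c2_def \<delta>_def power_mult_distrib)
        then show ?thesis using d0 c20 by (simp add: K1_def field_simps)
      qed
      have P2': "B_avg p \<eta> lam f a \<le> ennreal (K1 / \<delta>^2) * I"
        using P2[OF hol e p ad, of lam] unfolding Ieq Keq .
      have lt: "ennreal (cmod (f a) powr p) < ennreal \<epsilon>' * B_avg p \<eta> lam f a"
        using aB by (simp add: B_def \<epsilon>'_def)
      have h1: "ennreal (cmod (f a) powr p) \<le> ennreal \<epsilon>' * (ennreal (K1 / \<delta>^2) * I)"
        using less_imp_le[OF lt] mult_left_mono[OF P2', of "ennreal \<epsilon>'"] by simp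
      have G1a: "ennreal (G1 a) = ennreal (1/\<delta>) * ennreal (cmod (f a) powr p)"
      proof -
        have "G1 a = 1/\<delta> * cmod (f a) powr p" by (simp add: G1_def \<delta>_def)
        moreover have "ennreal (1/\<delta> * cmod (f a) powr p) = ennreal (1/\<delta>) * ennreal (cmod (f a) powr p)"
          by (rule ennreal_mult) (use d0 in auto)
        ultimately show ?thesis by (simp only:)
      qed
      have "ennreal (G1 a) \<le> ennreal (1/\<delta>) * (ennreal \<epsilon>' * (ennreal (K1 / \<delta>^2) * I))"
        unfolding G1a by (rule mult_left_mono[OF h1]) simp
      also have "\<dots> = ennreal (\<epsilon>' * K1 / \<delta>^3) * I"
      proof -
        have "ennreal (1/\<delta>) * (ennreal \<epsilon>' * (ennreal (K1 / \<delta>^2) * I)) = ennreal (1/\<delta> * (\<epsilon>' * (K1 / \<delta>^2))) * I"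
        proof -
          have a1: "0 \<le> 1/\<delta>" and a2: "0 \<le> K1/\<delta>^2" using d0 K10 by auto
          have a3: "0 \<le> \<epsilon>' * (K1/\<delta>^2)" using e'0 a2 by (rule mult_nonneg_nonneg)
          have q1: "ennreal (1/\<delta> * (\<epsilon>' * (K1/\<delta>^2))) = ennreal (1/\<delta>) * (ennreal \<epsilon>' * ennreal (K1/\<delta>^2))"
            by (simp only: ennreal_mult[OF a1 a3] ennreal_mult[OF e'0 a2])
          show ?thesis by (simp only: q1 mult.assoc)
        qed
        also have "1/\<delta> * (\<epsilon>' * (K1 / \<delta>^2)) = \<epsilon>' * K1 / \<delta>^3"
          using d0 by (simp add: field_simps power2_eq_square power3_eq_cube)
        finally show ?thesis .
      qed
      also have "\<dots> = (\<integral>\<^sup>+z. ennreal (\<epsilon>' * K1 / \<delta>^3) * (F z * indicator (ball a (\<kappa> * \<delta>)) z) \<partial>lborel)"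
        unfolding I_def by (rule nn_integral_cmult[symmetric]) (intro borel_measurable_times_ennreal borel_measurable_indicator, use Fm in auto)
      also have "\<dots> \<le> (\<integral>\<^sup>+z. \<Psi> (a, z) \<partial>lborel)"
      proof (rule nn_integral_mono)
        fix z
        show "ennreal (\<epsilon>' * K1 / \<delta>^3) * (F z * indicator (ball a (\<kappa> * \<delta>)) z) \<le> \<Psi> (a, z)"
        proof (cases "z \<in> ball a (\<kappa> * \<delta>)")
          case False then show ?thesis by simp
        next
          case zb: True
          have hz: "cmod (z - a) < \<kappa> * (1 - cmod a)"
            using zb by (simp add: dist_norm norm_minus_commute \<delta>_def)
          have bb1: "\<kappa> + (1-\<kappa>) * (1 - (1-\<kappa>)/16) \<le> \<beta>" by (simp add: \<beta>_def)
          have bb2: "sqrt (((1+\<kappa>)/(1-\<kappa>))^2 / (1 + ((1+\<kappa>)/(1-\<kappa>))^2)) \<le> \<beta>" by (simp add: \<beta>_def T_def)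
          have zG: "z \<in> Gb" unfolding Gb_def by (rule geo[OF k \<xi> aG hz bb1 bb2 b0(2)])
          define \<delta>z where "\<delta>z = 1 - cmod z"
          have t1: "cmod z \<le> cmod a + cmod (z - a)" using norm_triangle_ineq[of a "z - a"] by simp
          have t2: "cmod a \<le> cmod z + cmod (z - a)" using norm_triangle_ineq[of z "a - z"] by (simp add: norm_minus_commute)
          have hz': "cmod (z - a) < \<kappa> * \<delta>" using hz by (simp add: \<delta>_def)
          have dz1: "(1-\<kappa>) * \<delta> < \<delta>z" using t1 hz' by (simp add: \<delta>z_def \<delta>_def algebra_simps)
          have dz2: "\<delta>z < (1+\<kappa>) * \<delta>" using t2 hz' by (simp add: \<delta>z_def \<delta>_def algebra_simps)
          have dz0: "0 < \<delta>z" using dz1 k d0 by (smt (verit) mult_pos_pos)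
          have aball: "a \<in> ball z (\<kappa>' * \<delta>z)"
          proof -
            have "\<kappa> * ((1-\<kappa>) * \<delta>) \<le> \<kappa> * \<delta>z" using dz1 k by (intro mult_left_mono) auto
            then have "\<kappa> * \<delta> \<le> \<kappa>' * \<delta>z" using k by (simp add: \<kappa>'_def field_simps)
            then show ?thesis using hz' by (simp add: dist_norm)
          qed
          have coef: "\<epsilon>' * K1 / \<delta>^3 \<le> \<epsilon>' * K1 * (1+\<kappa>)^3 / \<delta>z^3"
          proof -
            have "(1+\<kappa>)^3 / ((1+\<kappa>) * \<delta>)^3 \<le> (1+\<kappa>)^3 / \<delta>z^3"
              by (rule frac_le) (use k dz0 dz2 in \<open>auto intro!: power_mono\<close>)
            moreover have "(1+\<kappa>)^3 / ((1+\<kappa>) * \<delta>)^3 = 1 / \<delta>^3" using k by (simp add: power_mult_distrib)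
            ultimately have "1 / \<delta>^3 \<le> (1+\<kappa>)^3 / \<delta>z^3" by simp
            then have "\<epsilon>' * K1 * (1 / \<delta>^3) \<le> \<epsilon>' * K1 * ((1+\<kappa>)^3 / \<delta>z^3)"
              using e'0 K10 by (intro mult_left_mono) auto
            then show ?thesis by simp
          qed
          have "ennreal (\<epsilon>' * K1 / \<delta>^3) * (F z * indicator (ball a (\<kappa> * \<delta>)) z) = ennreal (\<epsilon>' * K1 / \<delta>^3) * F z"
            using zb by simp
          also have "\<dots> \<le> ennreal (\<epsilon>' * K1 * (1+\<kappa>)^3 / \<delta>z^3) * F z"
            by (rule mult_right_mono) (use coef in \<open>auto intro: ennreal_leI\<close>)
          also have "\<dots> = \<Psi> (a, z)" using zG aball by (simp add: \<Psi>_def \<delta>z_def)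
          finally show ?thesis .
        qed
      qed
      finally show ?thesis using True by simp
    qed
    have s3: "(\<integral>\<^sup>+a. \<Psi> (a, z) \<partial>lborel) \<le> ennreal (\<epsilon> * C2) * (ennreal (G1' z) * indicator Gb z)" for z
    proof (cases "z \<in> Gb")
      case False then show ?thesis by (simp add: \<Psi>_def)
    next
      case True
      define \<delta> where "\<delta> = 1 - cmod z"
      define X where "X = cmod (f z) powr p"
      define c where "c = \<epsilon>' * K1 * (1+\<kappa>)^3"
      have d0: "0 < \<delta>" using Gbd[OF True] by (simp add: \<delta>_def)
      have X0: "0 \<le> X" by (simp add: X_def)
      have c0: "0 \<le> c" using e'0 K10 k by (simp add: c_def)
      have zd: "z \<in> unit_disc" using Gbd[OF True] by (simp add: unit_disc_def)
      have Fz: "F z = ennreal X" by (simp add: F_def gD[OF zd] X_def)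
      have G1'z: "G1' z = X / \<delta>" by (simp add: G1'_def gD[OF zd] X_def \<delta>_def)
      have "(\<integral>\<^sup>+a. \<Psi> (a, z) \<partial>lborel) = (\<integral>\<^sup>+a. (ennreal (c / \<delta>^3) * ennreal X) * indicator (ball z (\<kappa>' * \<delta>)) a \<partial>lborel)"
        by (rule nn_integral_cong) (simp add: \<Psi>_def True Fz c_def \<delta>_def)
      also have "\<dots> = (ennreal (c / \<delta>^3) * ennreal X) * emeasure lborel (ball z (\<kappa>' * \<delta>))"
        by (rule nn_integral_cmult_indicator) simp
      also have "\<dots> \<le> (ennreal (c / \<delta>^3) * ennreal X) * ennreal (4 * (\<kappa>' * \<delta>)^2)"
        by (rule mult_left_mono[OF emeasure_ball_le]) simp
      also have "\<dots> = ennreal (c / \<delta>^3 * X * (4 * (\<kappa>' * \<delta>)^2))"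
      proof -
        have a0: "0 \<le> c / \<delta>^3" using c0 d0 by simp
        have dd: "0 \<le> 4 * (\<kappa>' * \<delta>)^2" by simp
        show ?thesis by (simp only: ennreal_mult[OF mult_nonneg_nonneg[OF a0 X0] dd] ennreal_mult[OF a0 X0])
      qed
      also have "\<dots> \<le> ennreal (\<epsilon> * C2 * (X / \<delta>))"
      proof (rule ennreal_leI)
        have "c / \<delta>^3 * X * (4 * (\<kappa>' * \<delta>)^2) = \<epsilon>' * C2 * (X / \<delta>)"
          using d0 by (simp add: c_def C2_def field_simps power2_eq_square power3_eq_cube)
        also have "\<dots> \<le> \<epsilon> * C2 * (X / \<delta>)"
          using e'le C20 X0 d0 by (intro mult_right_mono) auto
        finally show "c / \<delta>^3 * X * (4 * (\<kappa>' * \<delta>)^2) \<le> \<epsilon> * C2 * (X / \<delta>)" .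
      qed
      also have "\<dots> = ennreal (\<epsilon> * C2) * (ennreal (G1' z) * indicator Gb z)"
      proof -
        have "ennreal (\<epsilon> * C2 * (X / \<delta>)) = ennreal (\<epsilon> * C2) * ennreal (X / \<delta>)"
          by (rule ennreal_mult) (use eps C20 X0 d0 in auto)
        then show ?thesis using True by (simp add: G1'z)
      qed
      finally show ?thesis .
    qed
    have "(\<integral>\<^sup>+a. ennreal (G1 a) * indicator (B \<inter> Gamma_reg (1/2) \<xi>) a \<partial>lborel) \<le> (\<integral>\<^sup>+a. (\<integral>\<^sup>+z. \<Psi> (a, z) \<partial>lborel) \<partial>lborel)"
      by (rule nn_integral_mono) (rule s1)
    also have "\<dots> = (\<integral>\<^sup>+z. (\<integral>\<^sup>+a. \<Psi> (a, z) \<partial>lborel) \<partial>lborel)"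
      by (rule pair_sigma_finite.Fubini'[symmetric])
         (auto simp: lborel_prod pair_sigma_finite_def lborel.sigma_finite_measure_axioms \<Psi>m)
    also have "\<dots> \<le> (\<integral>\<^sup>+z. ennreal (\<epsilon> * C2) * (ennreal (G1' z) * indicator Gb z) \<partial>lborel)"
      by (rule nn_integral_mono) (rule s3)
    also have "\<dots> = ennreal (\<epsilon> * C2) * (\<integral>\<^sup>+z. ennreal (G1' z) * indicator Gb z \<partial>lborel)"
      by (rule nn_integral_cmult) measurable
    also have "(\<integral>\<^sup>+z. ennreal (G1' z) * indicator Gb z \<partial>lborel) = (\<integral>\<^sup>+z. ennreal (G1 z) * indicator Gb z \<partial>lborel)"
    proof (rule nn_integral_cong)
      fix z show "ennreal (G1' z) * indicator Gb z = ennreal (G1 z) * indicator Gb z"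
        using Gbd[of z] by (cases "z \<in> Gb") (auto simp: G1'_def G1_def gD unit_disc_def)
    qed
    finally have main: "(\<integral>\<^sup>+a. ennreal (G1 a) * indicator (B \<inter> Gamma_reg (1/2) \<xi>) a \<partial>lborel)
        \<le> ennreal (\<epsilon> * C2) * (\<integral>\<^sup>+z. ennreal (G1 z) * indicator Gb z \<partial>lborel)" .
    show ?thesis
      unfolding B_def[symmetric] G1_def[abs_def, symmetric] area_int_def Gb_def[symmetric]
    proof -
      have "(\<integral>\<^sup>+a. ennreal (G1 a) * indicator (B \<inter> Gamma_reg (1/2) \<xi>) a \<partial>lborel) / ennreal pi
         \<le> (ennreal (\<epsilon> * C2) * (\<integral>\<^sup>+z. ennreal (G1 z) * indicator Gb z \<partial>lborel)) / ennreal pi"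
        by (rule divide_right_mono_ennreal[OF main])
      also have "\<dots> = ennreal (\<epsilon> * C2) * ((\<integral>\<^sup>+z. ennreal (G1 z) * indicator Gb z \<partial>lborel) / ennreal pi)"
        by (simp add: ennreal_times_divide)
      finally show "(\<integral>\<^sup>+a. ennreal (G1 a) * indicator (B \<inter> Gamma_reg (1/2) \<xi>) a \<partial>lborel) / ennreal pi
         \<le> ennreal (\<epsilon> * C2) * ((\<integral>\<^sup>+z. ennreal (G1 z) * indicator Gb z \<partial>lborel) / ennreal pi)" .
    qed
  qed
  show ?thesis
    using b12 b1 C20 main unfolding Let_def by blast
qed

end
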